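(* Let $d=n+1$, $u_k=e_k$ for $k=1,\dots,n$ and $u_{n+1}=e_1+\dots+e_n$; take $\lambda^{(j)}_k=0$ for $j=1,2,3$, $k=1,\dots,n$, and $\lambda^{(1)}_{n+1}=-\lambda$ with $\lambda>0$, $\lambda^{(2)}_{n+1}=\lambda^{(3)}_{n+1}=0$. Then the circle $N$ acts freely on $\mu^{-1}(0)$, the quotient $M=\mu^{-1}(0)/N$ is a smooth $4n$-manifold with two connected components, each diffeomorphic to $\mathbb R^{4n}$ and interchanged by the involution $\hat\sigma$, and the induced hypersymplectic structure on $M$ is non-degenerate everywhere.
   Context: Setting: $\mathbb C^{d,d}=\mathbb C^d\times\mathbb C^d$ with coordinates $(z,w)$, $g=\mathrm{Re}\sum_k(dz_k\,d\bar z_k-dw_k\,d\bar w_k)$, $I(z,w)=(iz,-iw)$, $S(z,w)=(w,z)$, $T=IS$, $\omega_A(Y,Z)=g(Y,AZ)$; $\mathbb T^d$ acts by $(z_k,w_k)\mapsto(e^{i\theta_k}z_k,e^{i\theta_k}w_k)$. With $u_1,\dots,u_d\in\mathbb Z^n$ spanning $\mathbb R^n$: $\beta\colon\mathbb R^d\to\mathbb R^n$, $e_k\mapsto u_k$; $\mathfrak n=\ker\beta$ with inclusion $\iota$; $N\subset\mathbb T^d$ the kernel of the induced homomorphism $\mathbb T^d\to\mathbb T^n$. Identify $\mathbb R^d$ with its dual. With real constants $\lambda^{(j)}_k$ and $\lambda^{(c)}_k=\lambda^{(2)}_k+i\lambda^{(3)}_k$: $\mu_I(z,w)=\sum_k(\tfrac12(|z_k|^2+|w_k|^2)+\lambda^{(1)}_k)\iota^*e_k$,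 $(\mu_S+i\mu_T)(z,w)=\sum_k(iz_k\bar w_k+\lambda^{(c)}_k)\iota^*e_k$, $M=\mu^{-1}(0)/N$. The induced forms $\omega'_A$ on $M$ satisfy $\pi^*\omega'_A=\omega_A|_{\mu^{-1}(0)}$. $\hat\sigma$ is the involution of $M$ induced by $\sigma(z,w)=(\bar w,\bar z)$. *)

theory Defs
  imports "HOL-Analysis.Analysis"
begin

type_synonym 'd cpt = "(complex^'d) \<times> (complex^'d)"

definition gH :: "'d::finite cpt \<Rightarrow> 'd cpt \<Rightarrow> real" where
  "gH Y Y' = Re (\<Sum>k\<in>UNIV. fst Y $ k * cnj (fst Y' $ k) - snd Y $ k * cnj (snd Y' $ k))"

definition opI :: "'d::finite cpt \<Rightarrow> 'd cpt" where
  "opI Y = ((\<chi> k. \<i> * fst Y $ k), (\<chi> k. - \<i> * snd Y $ k))"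

definition opS :: "'d::finite cpt \<Rightarrow> 'd cpt" where
  "opS Y = (snd Y, fst Y)"

definition opT :: "'d::finite cpt \<Rightarrow> 'd cpt" where
  "opT Y = opI (opS Y)"

definition omega :: "('d::finite cpt \<Rightarrow> 'd cpt) \<Rightarrow> 'd cpt \<Rightarrow> 'd cpt \<Rightarrow> real" where
  "omega A Y Y' = gH Y (A Y')"

text \<open>Action of the torus T^d (elements given as unit complex numbers t k).\<close>
definition torus_act :: "('d::finite \<Rightarrow> complex) \<Rightarrow> 'd cpt \<Rightarrow> 'd cpt" where
  "torus_act t p = ((\<chi> k. t k * fst p $ k), (\<chi> k. t k * snd p $ k))"

definition sigma :: "'d::finite cpt \<Rightarrow> 'd cpt" where
  "sigma p = ((\<chi> k. cnj (snd p $ k)), (\<chi> k. cnj (fst p $ k)))"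

text \<open>u k is the vector u_k in Z^n, with components u k j.
  beta : R^d -> R^n, e_k |-> u_k; its kernel is the Lie algebra n.\<close>
definition ker_beta :: "('d::finite \<Rightarrow> 'n::finite \<Rightarrow> int) \<Rightarrow> ('d \<Rightarrow> real) set" where
  "ker_beta u = {\<xi>. \<forall>j. (\<Sum>k\<in>UNIV. \<xi> k * of_int (u k j)) = 0}"

text \<open>N = kernel of the induced homomorphism T^d -> T^n, t |-> (prod_k t_k^(u_k)_j)_j.\<close>
definition kerN :: "('d::finite \<Rightarrow> 'n::finite \<Rightarrow> int) \<Rightarrow> ('d \<Rightarrow> complex) set" where
  "kerN u = {t. (\<forall>k. cmod (t k) = 1) \<and> (\<forall>j. (\<Prod>k\<in>UNIV. t k powi (u k j)) = 1)}"

text \<open>mu^{-1}(0): mu takes values in n^*; iota^* e_k pairs with xi in n as xi_k.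
  mu_I and mu_S + i mu_T vanish iff they vanish on every xi in n.\<close>
definition level_set ::
  "('d::finite \<Rightarrow> 'n::finite \<Rightarrow> int) \<Rightarrow> ('d \<Rightarrow> real) \<Rightarrow> ('d \<Rightarrow> complex) \<Rightarrow> 'd cpt set" where
  "level_set u l1 lc = {p. \<forall>\<xi>\<in>ker_beta u.
      (\<Sum>k\<in>UNIV. ((cmod (fst p $ k))\<^sup>2 + (cmod (snd p $ k))\<^sup>2) / 2 * \<xi> k + l1 k * \<xi> k) = 0
    \<and> (\<Sum>k\<in>UNIV. (\<i> * fst p $ k * cnj (snd p $ k) + lc k) * of_real (\<xi> k)) = 0}"

definition orbit :: "('d::finite \<Rightarrow> complex) set \<Rightarrow> 'd cpt \<Rightarrow> 'd cpt set" where
  "orbit N p = (\<lambda>t. torus_act t p) ` N"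

section \<open>The specific example: d = n+1, indices Some j (j = 1..n) and None (index n+1)\<close>

definition u_ex :: "'n::finite option \<Rightarrow> 'n \<Rightarrow> int" where
  "u_ex k j = (case k of Some i \<Rightarrow> (if i = j then 1 else 0) | None \<Rightarrow> 1)"

definition l1_ex :: "real \<Rightarrow> 'n::finite option \<Rightarrow> real" where
  "l1_ex lam k = (case k of Some i \<Rightarrow> 0 | None \<Rightarrow> - lam)"

definition dir_deriv :: "('a::real_normed_vector \<Rightarrow> 'b::real_normed_vector) \<Rightarrow> 'a \<Rightarrow> 'a \<Rightarrow> 'b" where
  "dir_deriv f v = (\<lambda>x. frechet_derivative f (at x) v)"

fun iter_dd :: "('a::real_normed_vector \<Rightarrow> 'b::real_normed_vector) \<Rightarrow> 'a list \<Rightarrow> 'a \<Rightarrow> 'b" where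
  "iter_dd f [] = f"
| "iter_dd f (v # vs) = dir_deriv (iter_dd f vs) v"

definition smooth_on :: "'a::real_normed_vector set \<Rightarrow> ('a \<Rightarrow> 'b::real_normed_vector) \<Rightarrow> bool" where
  "smooth_on U f \<longleftrightarrow> open U \<and> (\<forall>vs. iter_dd f vs differentiable_on U)"

definition smooth_on_set :: "'a::real_normed_vector set \<Rightarrow> ('a \<Rightarrow> 'b::real_normed_vector) \<Rightarrow> bool" where
  "smooth_on_set Z f \<longleftrightarrow> (\<forall>p\<in>Z. \<exists>U g. open U \<and> p \<in> U \<and> smooth_on U g \<and> (\<forall>x\<in>U \<inter> Z. g x = f x))"

definition embedded_submanifold :: "nat \<Rightarrow> 'a::euclidean_space set \<Rightarrow> bool" where
  "embedded_submanifold k Z \<longleftrightarrow> (\<forall>p\<in>Z. \<exists>U (\<phi>::'a \<Rightarrow> 'a) \<psi> L.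
      open U \<and> p \<in> U \<and> open (\<phi> ` U) \<and> smooth_on U \<phi> \<and> smooth_on (\<phi> ` U) \<psi>
      \<and> (\<forall>x\<in>U. \<psi> (\<phi> x) = x) \<and> subspace L \<and> dim L = k \<and> \<phi> ` (Z \<inter> U) = \<phi> ` U \<inter> L)"

definition tangent_space :: "'a::real_normed_vector set \<Rightarrow> 'a \<Rightarrow> 'a set" where
  "tangent_space Z p = {v. \<exists>\<gamma>. \<gamma> 0 = p \<and> (\<forall>t. \<gamma> t \<in> Z) \<and> (\<gamma> has_vector_derivative v) (at 0)}"

end

theory Submission
  imports Defs
begin

inductive sm :: "'a::real_normed_vector set \<Rightarrow> ('a \<Rightarrow> real) \<Rightarrow> bool" for U where
  sm_const: "sm U (\<lambda>x. c)"
| sm_lin: "bounded_linear l \<Longrightarrow> sm U l"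
| sm_add: "sm U f \<Longrightarrow> sm U g \<Longrightarrow> sm U (\<lambda>x. f x + g x)"
| sm_mult: "sm U f \<Longrightarrow> sm U g \<Longrightarrow> sm U (\<lambda>x. f x * g x)"
| sm_powr: "sm U f \<Longrightarrow> (\<forall>x\<in>U. f x > 0) \<Longrightarrow> sm U (\<lambda>x. f x powr a)"
| sm_cong: "sm U f \<Longrightarrow> (\<forall>x\<in>U. f x = g x) \<Longrightarrow> sm U g"

lemma fd_local:
  assumes "open U" "x \<in> U" "\<forall>y\<in>U. f y = g y"
  shows "frechet_derivative f (at x) = frechet_derivative g (at x)"
proof -
  have "(f has_derivative D) (at x) \<longleftrightarrow> (g has_derivative D) (at x)" for D
  proof
    assume "(f has_derivative D) (at x)"
    then show "(g has_derivative D) (at x)"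
      by (rule has_derivative_transform_within_open[OF _ assms(1,2)]) (use assms(3) in auto)
  next
    assume "(g has_derivative D) (at x)"
    then show "(f has_derivative D) (at x)"
      by (rule has_derivative_transform_within_open[OF _ assms(1,2)]) (use assms(3) in auto)
  qed
  then show ?thesis unfolding frechet_derivative_def by simp
qed

lemma diff_local:
  assumes "open U" "x \<in> U" "\<forall>y\<in>U. f y = g y" "f differentiable (at x)"
  shows "g differentiable (at x)"
proof -
  obtain D where "(f has_derivative D) (at x)" using assms(4) unfolding differentiable_def by blast
  then have "(g has_derivative D) (at x)"
      by (rule has_derivative_transform_within_open[OF _ assms(1,2)]) (use assms(3) in auto)
  then show ?thesis unfolding differentiable_def by blast
qed


lemma fd_apply: "(f has_derivative D) (at x) \<Longrightarrow> frechet_derivative f (at x) v = D v"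
  by (simp add: frechet_derivative_at[symmetric])

definition DP :: "'a::real_normed_vector set \<Rightarrow> ('a \<Rightarrow> real) \<Rightarrow> bool" where
  "DP U f \<longleftrightarrow> (\<forall>x\<in>U. f differentiable (at x)) \<and> (\<forall>v. sm U (\<lambda>x. frechet_derivative f (at x) v))"

lemma case_const: "DP U (\<lambda>x. c)"
proof -
  have d: "\<And>x. ((\<lambda>x. c) has_derivative (\<lambda>h. 0)) (at x)" by (rule derivative_intros)
  have fd: "\<And>x. frechet_derivative (\<lambda>x. c) (at x) = (\<lambda>h. 0)" using frechet_derivative_at[OF d] by simp
  show ?thesis unfolding DP_def differentiable_def apply (intro conjI ballI allI) using d apply blast by (simp add: fd sm.sm_const)
qed

lemma case_lin: "bounded_linear l \<Longrightarrow> DP U l"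
proof -
  assume l: "bounded_linear l"
  have d: "\<And>x. (l has_derivative l) (at x)" using bounded_linear_imp_has_derivative[OF l] .
  have fd: "\<And>x. frechet_derivative l (at x) = l" using frechet_derivative_at[OF d] by simp
  show ?thesis unfolding DP_def differentiable_def apply (intro conjI ballI allI) using d apply blast by (simp add: fd sm.sm_const)
qed

lemma case_add: assumes "DP U f" "DP U g" shows "DP U (\<lambda>x. f x + g x)"
proof -
  have fd: "\<forall>x\<in>U. f differentiable (at x)" "\<forall>x\<in>U. g differentiable (at x)"
    and fs: "\<And>v. sm U (\<lambda>x. frechet_derivative f (at x) v)" "\<And>v. sm U (\<lambda>x. frechet_derivative g (at x) v)"
    using assms unfolding DP_def by auto
  have D: "((\<lambda>x. f x + g x) has_derivative (\<lambda>h. frechet_derivative f (at x) h + frechet_derivative g (at x) h)) (at x)"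
    if "x \<in> U" for x
    using fd that by (intro has_derivative_add) (auto simp: frechet_derivative_works)
  show ?thesis unfolding DP_def
  proof (intro conjI ballI allI)
    show "(\<lambda>x. f x + g x) differentiable at x" if "x \<in> U" for x using D that unfolding differentiable_def by blast
    fix v
    have "\<forall>x\<in>U. frechet_derivative f (at x) v + frechet_derivative g (at x) v = frechet_derivative (\<lambda>x. f x + g x) (at x) v"
      by (simp add: fd_apply[OF D])
    then show "sm U (\<lambda>x. frechet_derivative (\<lambda>x. f x + g x) (at x) v)"
      by (rule sm_cong[OF sm.sm_add[OF fs]])
  qed
qed

lemma case_mult: assumes "DP U f" "DP U g" "sm U f" "sm U g" shows "DP U (\<lambda>x. f x * g x)"
proof -
  have fd: "\<forall>x\<in>U. f differentiable (at x)" "\<forall>x\<in>U. g differentiable (at x)"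
    and fs: "\<And>v. sm U (\<lambda>x. frechet_derivative f (at x) v)" "\<And>v. sm U (\<lambda>x. frechet_derivative g (at x) v)"
    using assms unfolding DP_def by auto
  have D: "((\<lambda>x. f x * g x) has_derivative (\<lambda>h. f x * frechet_derivative g (at x) h + frechet_derivative f (at x) h * g x)) (at x)"
    if "x \<in> U" for x
    using fd that by (intro has_derivative_mult) (auto simp: frechet_derivative_works)
  show ?thesis unfolding DP_def
  proof (intro conjI ballI allI)
    show "(\<lambda>x. f x * g x) differentiable at x" if "x \<in> U" for x using D that unfolding differentiable_def by blast
    fix v
    have "\<forall>x\<in>U. f x * frechet_derivative g (at x) v + frechet_derivative f (at x) v * g x = frechet_derivative (\<lambda>x. f x * g x) (at x) v"
      by (simp add: fd_apply[OF D])
    then show "sm U (\<lambda>x. frechet_derivative (\<lambda>x. f x * g x) (at x) v)"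
      by (rule sm_cong[OF sm.sm_add[OF sm.sm_mult[OF assms(3) fs(2)] sm.sm_mult[OF fs(1) assms(4)]]])
  qed
qed

lemma case_powr: assumes "DP U f" "sm U f" "\<forall>x\<in>U. f x > 0" shows "DP U (\<lambda>x. f x powr a)"
proof -
  have fd: "\<forall>x\<in>U. f differentiable (at x)"
    and fs: "\<And>v. sm U (\<lambda>x. frechet_derivative f (at x) v)"
    using assms unfolding DP_def by auto
  have D: "((\<lambda>x. f x powr a) has_derivative (\<lambda>h. a * f x powr (a - 1) * frechet_derivative f (at x) h)) (at x)"
    if x: "x \<in> U" for x
  proof -
    have "((\<lambda>x. f x powr (\<lambda>_. a) x) has_derivative (\<lambda>h. (f x powr a) * ((\<lambda>h. 0) h * ln (f x) + frechet_derivative f (at x) h * a / f x))) (at x)"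
      apply (rule has_derivative_powr)
      using fd assms(3) x by (auto simp: frechet_derivative_works intro: derivative_intros)
    moreover have "(\<lambda>h. (f x powr a) * ((\<lambda>h. 0) h * ln (f x) + frechet_derivative f (at x) h * a / f x))
       = (\<lambda>h. a * f x powr (a - 1) * frechet_derivative f (at x) h)"
    proof
      fix h
      have "f x > 0" using assms(3) x by auto
      then show "(f x powr a) * ((\<lambda>h. 0) h * ln (f x) + frechet_derivative f (at x) h * a / f x) = a * f x powr (a - 1) * frechet_derivative f (at x) h"
        by (simp add: powr_diff)
    qed
    ultimately show ?thesis by simp
  qed
  show ?thesis unfolding DP_def
  proof (intro conjI ballI allI)
    show "(\<lambda>x. f x powr a) differentiable at x" if "x \<in> U" for x using D that unfolding differentiable_def by blast
    fix v
    have "\<forall>x\<in>U. a * f x powr (a - 1) * frechet_derivative f (at x) v = frechet_derivative (\<lambda>x. f x powr a) (at x) v"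
      by (simp add: fd_apply[OF D])
    then show "sm U (\<lambda>x. frechet_derivative (\<lambda>x. f x powr a) (at x) v)"
      by (rule sm_cong[OF sm.sm_mult[OF sm.sm_mult[OF sm.sm_const sm.sm_powr[OF assms(2,3)]] fs]])
  qed
qed

lemma case_cong: assumes "open U" "DP U f" "\<forall>x\<in>U. f x = g x" shows "DP U g"
proof -
  have e: "\<forall>x\<in>U. frechet_derivative f (at x) = frechet_derivative g (at x)"
    using fd_local[OF assms(1)] assms(3) by blast
  have fd: "\<forall>x\<in>U. f differentiable (at x)"
    and fs: "\<And>v. sm U (\<lambda>x. frechet_derivative f (at x) v)"
    using assms unfolding DP_def by auto
  show ?thesis unfolding DP_def
  proof (intro conjI ballI allI)
    show "g differentiable at x" if "x \<in> U" for x using diff_local[OF assms(1) that assms(3)] fd that by blast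
    fix v
    show "sm U (\<lambda>x. frechet_derivative g (at x) v)"
      by (rule sm_cong[OF fs[of v]]) (use e in simp)
  qed
qed

lemma sm_deriv:
  assumes "open U" "sm U f"
  shows "DP U f"
  using assms(2)
proof induction
  case (sm_const c) then show ?case by (rule case_const)
next
  case (sm_lin l) then show ?case by (rule case_lin)
next
  case (sm_add f g) then show ?case by (intro case_add)
next
  case (sm_mult f g) then show ?case by (intro case_mult)
next
  case (sm_powr f a) then show ?case by (intro case_powr)
next
  case (sm_cong f g) then show ?case using case_cong[OF assms(1)] by blast
qed

lemma sm_smooth:
  assumes "open U" "sm U f"
  shows "smooth_on U f"
proof -
  have EX: "\<exists>g. sm U g \<and> (\<forall>x\<in>U. iter_dd f vs x = g x)" for vs
  proof (induction vs)
    case Nil then show ?case using assms by auto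
  next
    case (Cons v vs)
    then obtain g where g: "sm U g" "\<forall>x\<in>U. iter_dd f vs x = g x" by blast
    have "\<forall>x\<in>U. iter_dd f (v#vs) x = frechet_derivative g (at x) v"
      using fd_local[OF assms(1) _ g(2)] by (auto simp: dir_deriv_def)
    then show ?case using sm_deriv[OF assms(1) g(1)] unfolding DP_def by blast
  qed
  then have "iter_dd f vs differentiable_on U" for vs
  proof -
    obtain g where g: "sm U g" "\<forall>x\<in>U. iter_dd f vs x = g x" using EX by blast
    have "\<forall>x\<in>U. g differentiable (at x)" using sm_deriv[OF assms(1) g(1)] unfolding DP_def by blast
    then have "\<forall>x\<in>U. iter_dd f vs differentiable (at x)"
      using diff_local[OF assms(1) _ ] g(2) by (metis (no_types, lifting))
    then show ?thesis by (simp add: differentiable_at_imp_differentiable_on)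
  qed
  then show ?thesis unfolding smooth_on_def using assms(1) by blast
qed

lemma sm_cmult: "sm U f \<Longrightarrow> sm U (\<lambda>x. c * f x)"
  by (rule sm_mult[OF sm_const])
lemma sm_minus: "sm U f \<Longrightarrow> sm U (\<lambda>x. - f x)"
  by (rule sm_cong[OF sm_cmult[of U f "-1"]]) auto
lemma sm_diff: assumes a: "sm U f" and b: "sm U g" shows "sm U (\<lambda>x. f x - g x)"
  by (rule sm_cong[OF sm_add[OF a sm_minus[OF b]]]) simp
lemma sm_sum: "finite S \<Longrightarrow> (\<And>i. i \<in> S \<Longrightarrow> sm U (f i)) \<Longrightarrow> sm U (\<lambda>x. \<Sum>i\<in>S. f i x)"
proof (induction S rule: finite_induct)
  case empty then show ?case by (simp add: sm_const)
next
  case (insert a S) then show ?case by (simp add: sm_add)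
qed
lemma sm_pow2: "sm U f \<Longrightarrow> sm U (\<lambda>x. (f x)\<^sup>2)"
  by (rule sm_cong[OF sm_mult]) (auto simp: power2_eq_square)
lemma sm_sqrt: "sm U f \<Longrightarrow> \<forall>x\<in>U. f x > 0 \<Longrightarrow> sm U (\<lambda>x. sqrt (f x))"
  by (rule sm_cong[OF sm_powr[of U f "1/2"]]) (auto simp: powr_half_sqrt)
lemma sm_inverse: "sm U f \<Longrightarrow> \<forall>x\<in>U. f x > 0 \<Longrightarrow> sm U (\<lambda>x. 1 / f x)"
  by (rule sm_cong[OF sm_powr[of U f "-1"]]) (auto simp: powr_minus_divide)
lemma sm_divide: "sm U f \<Longrightarrow> sm U g \<Longrightarrow> \<forall>x\<in>U. g x > 0 \<Longrightarrow> sm U (\<lambda>x. f x / g x)"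
  by (rule sm_cong[OF sm_mult[OF _ sm_inverse]]) auto

lemma sm_precomp:
  assumes "sm U f" "bounded_linear L"
  shows "sm (L -` U) (\<lambda>x. f (L x))"
  using assms(1)
proof induction
  case (sm_const c) then show ?case by (rule sm.sm_const)
next
  case (sm_lin l) then show ?case using assms(2) by (intro sm.sm_lin bounded_linear_compose[of l L])
next
  case (sm_add f g) show ?case by (rule sm.sm_add[OF sm_add.IH])
next
  case (sm_mult f g) show ?case by (rule sm.sm_mult[OF sm_mult.IH])
next
  case (sm_powr f a) show ?case by (rule sm.sm_powr[OF sm_powr.IH]) (use sm_powr.hyps(2) in auto)
next
  case (sm_cong f g) show ?case by (rule sm.sm_cong[OF sm_cong.IH]) (use sm_cong.hyps(2) in auto)
qed

definition csm :: "'a::real_normed_vector set \<Rightarrow> ('a \<Rightarrow> complex) \<Rightarrow> bool" where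
  "csm U f \<longleftrightarrow> sm U (\<lambda>x. Re (f x)) \<and> sm U (\<lambda>x. Im (f x))"

lemma csm_const: "csm U (\<lambda>x. c)" by (simp add: csm_def sm_const)
lemma csm_lin: "bounded_linear f \<Longrightarrow> csm U f"
  unfolding csm_def
  by (auto intro!: sm_lin bounded_linear_compose[of Re f] bounded_linear_compose[of Im f]
      bounded_linear_Re bounded_linear_Im)
lemma csm_add: "csm U f \<Longrightarrow> csm U g \<Longrightarrow> csm U (\<lambda>x. f x + g x)"
  by (simp add: csm_def sm_add)
lemma csm_diff: "csm U f \<Longrightarrow> csm U g \<Longrightarrow> csm U (\<lambda>x. f x - g x)"
  by (simp add: csm_def sm_diff)
lemma csm_minus: "csm U f \<Longrightarrow> csm U (\<lambda>x. - f x)"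
  by (simp add: csm_def sm_minus)
lemma csm_cnj: "csm U f \<Longrightarrow> csm U (\<lambda>x. cnj (f x))"
  by (simp add: csm_def sm_minus)
lemma csm_mult: "csm U f \<Longrightarrow> csm U g \<Longrightarrow> csm U (\<lambda>x. f x * g x)"
  unfolding csm_def by (auto intro!: sm_add sm_diff sm_mult)
lemma csm_of_real: "sm U f \<Longrightarrow> csm U (\<lambda>x. complex_of_real (f x))"
  by (simp add: csm_def sm_const)
lemma csm_Complex: "sm U f \<Longrightarrow> sm U g \<Longrightarrow> csm U (\<lambda>x. Complex (f x) (g x))"
  by (simp add: csm_def)
lemma csm_cong: "csm U f \<Longrightarrow> \<forall>x\<in>U. f x = g x \<Longrightarrow> csm U g"
  unfolding csm_def by (auto intro: sm_cong)
lemma csm_sum: "finite S \<Longrightarrow> (\<And>i. i \<in> S \<Longrightarrow> csm U (f i)) \<Longrightarrow> csm U (\<lambda>x. \<Sum>i\<in>S. f i x)"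
  unfolding csm_def by (auto simp: Re_sum Im_sum intro!: sm_sum)
lemma sm_Re: "csm U f \<Longrightarrow> sm U (\<lambda>x. Re (f x))" by (simp add: csm_def)
lemma sm_Im: "csm U f \<Longrightarrow> sm U (\<lambda>x. Im (f x))" by (simp add: csm_def)
lemma sm_cmod2: assumes "csm U f" shows "sm U (\<lambda>x. (cmod (f x))\<^sup>2)"
proof -
  have "sm U (\<lambda>x. (Re (f x))\<^sup>2 + (Im (f x))\<^sup>2)" using assms unfolding csm_def by (intro sm_add sm_pow2) auto
  then show ?thesis by (rule sm_cong) (auto simp: cmod_power2)
qed
lemma csm_div_real: "csm U f \<Longrightarrow> sm U g \<Longrightarrow> \<forall>x\<in>U. g x > 0 \<Longrightarrow> csm U (\<lambda>x. f x / complex_of_real (g x))"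
  unfolding csm_def by (auto simp: Re_divide_of_real Im_divide_of_real intro!: sm_divide)
lemma csm_fst_coord: "csm U (\<lambda>x::('d::finite) cpt. fst x $ k)"
  by (rule csm_lin) (intro bounded_linear_compose[of "\<lambda>v. v $ k" fst] bounded_linear_vec_nth bounded_linear_fst)
lemma csm_snd_coord: "csm U (\<lambda>x::('d::finite) cpt. snd x $ k)"
  by (rule csm_lin) (intro bounded_linear_compose[of "\<lambda>v. v $ k" snd] bounded_linear_vec_nth bounded_linear_snd)

lemma smooth_components:
  fixes f :: "'a::real_normed_vector \<Rightarrow> 'b::euclidean_space"
  assumes U: "open U" and c: "\<forall>b\<in>Basis. smooth_on U (\<lambda>x. f x \<bullet> b)"
  shows "smooth_on U f"
proof -
  have "(\<forall>x\<in>U. \<forall>b\<in>Basis. iter_dd f vs x \<bullet> b = iter_dd (\<lambda>y. f y \<bullet> b) vs x) \<and> iter_dd f vs differentiable_on U" for vs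
  proof (induction vs)
    case Nil
    have "\<forall>x\<in>U. f differentiable (at x)"
    proof
      fix x assume x: "x \<in> U"
      have "\<forall>b\<in>Basis. (\<lambda>y. f y \<bullet> b) differentiable (at x)"
        using c x U unfolding smooth_on_def
        by (metis iter_dd.simps(1) differentiable_on_eq_differentiable_at)
      then show "f differentiable (at x)" using differentiable_componentwise_within[of f x UNIV] by simp
    qed
    then show ?case by (simp add: differentiable_at_imp_differentiable_on)
  next
    case (Cons v vs)
    have IH1: "\<forall>x\<in>U. \<forall>b\<in>Basis. iter_dd f vs x \<bullet> b = iter_dd (\<lambda>y. f y \<bullet> b) vs x"
      and IH2: "iter_dd f vs differentiable_on U" using Cons by auto
    have A: "iter_dd f (v#vs) x \<bullet> b = iter_dd (\<lambda>y. f y \<bullet> b) (v#vs) x" if x: "x \<in> U" and b: "b \<in> Basis" for x b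
    proof -
      have dx: "iter_dd f vs differentiable (at x)" using IH2 x U differentiable_on_eq_differentiable_at by blast
      then obtain D where D: "(iter_dd f vs has_derivative D) (at x)" unfolding differentiable_def by blast
      have "((\<lambda>y. iter_dd f vs y \<bullet> b) has_derivative (\<lambda>h. D h \<bullet> b)) (at x)"
        using D by (intro derivative_eq_intros) auto
      then have "frechet_derivative (\<lambda>y. iter_dd f vs y \<bullet> b) (at x) v = D v \<bullet> b"
        by (rule fd_apply)
      moreover have "frechet_derivative (\<lambda>y. iter_dd f vs y \<bullet> b) (at x) = frechet_derivative (iter_dd (\<lambda>y. f y \<bullet> b) vs) (at x)"
        by (rule fd_local[OF U x]) (use IH1 b in auto)
      moreover have "frechet_derivative (iter_dd f vs) (at x) v = D v" by (rule fd_apply[OF D])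
      ultimately show ?thesis by (simp add: dir_deriv_def)
    qed
    have "\<forall>x\<in>U. iter_dd f (v#vs) differentiable (at x)"
    proof
      fix x assume x: "x \<in> U"
      have "\<forall>b\<in>Basis. (\<lambda>y. iter_dd f (v#vs) y \<bullet> b) differentiable (at x)"
      proof
        fix b :: 'b assume b: "b \<in> Basis"
        have d: "iter_dd (\<lambda>y. f y \<bullet> b) (v#vs) differentiable (at x)"
          using c b x U unfolding smooth_on_def
          by (metis differentiable_on_eq_differentiable_at)
        have e: "\<forall>y\<in>U. iter_dd (\<lambda>y. f y \<bullet> b) (v#vs) y = iter_dd f (v#vs) y \<bullet> b" using A b by auto
        show "(\<lambda>y. iter_dd f (v#vs) y \<bullet> b) differentiable (at x)"
          by (rule diff_local[OF U x e d])
      qed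
      then show "iter_dd f (v#vs) differentiable (at x)" using differentiable_componentwise_within[of "iter_dd f (v#vs)" x UNIV] by blast
    qed
    then show ?case using A by (simp add: differentiable_at_imp_differentiable_on)
  qed
  then show ?thesis unfolding smooth_on_def using U by blast
qed

lemma smooth_sm_components:
  fixes f :: "'a::real_normed_vector \<Rightarrow> 'b::euclidean_space"
  assumes U: "open U" and c: "\<forall>b\<in>Basis. sm U (\<lambda>x. f x \<bullet> b)"
  shows "smooth_on U f"
  using smooth_components[OF U] sm_smooth[OF U] c by blast

lemma cpt_components:
  fixes f :: "'a::real_normed_vector \<Rightarrow> ('d::finite) cpt"
  assumes "\<And>k. csm U (\<lambda>x. fst (f x) $ k)" "\<And>k. csm U (\<lambda>x. snd (f x) $ k)"
  shows "\<forall>b\<in>Basis. sm U (\<lambda>x. f x \<bullet> b)"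
  using assms unfolding csm_def
  by (auto simp: Basis_prod_def Basis_vec_def inner_axis Basis_complex_def inner_prod_def inner_complex_def)

lemma vec_components:
  fixes f :: "'a::real_normed_vector \<Rightarrow> real^'m"
  assumes "\<And>k. sm U (\<lambda>x. f x $ k)"
  shows "\<forall>b\<in>Basis. sm U (\<lambda>x. f x \<bullet> b)"
  using assms by (auto simp: Basis_vec_def inner_axis)

lemma sm_differentiable: "open U \<Longrightarrow> sm U f \<Longrightarrow> x \<in> U \<Longrightarrow> f differentiable (at x)"
  using sm_deriv unfolding DP_def by blast

lemma smooth_differentiable: "smooth_on U f \<Longrightarrow> x \<in> U \<Longrightarrow> f differentiable (at x)"
  unfolding smooth_on_def by (metis iter_dd.simps(1) differentiable_on_eq_differentiable_at)

lemma sum_option: "(\<Sum>k\<in>(UNIV::'n::finite option set). f k) = f None + (\<Sum>j\<in>UNIV. f (Some j))"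
proof -
  have U: "(UNIV::'n option set) = insert None (range Some)" by (auto intro: option.exhaust)
  have "(\<Sum>k\<in>insert None (range Some). f k) = f None + sum f (range Some)" by (rule sum.insert) auto
  also have "sum f (range Some) = (\<Sum>j\<in>UNIV. f (Some j))" by (subst sum.reindex) (auto simp: inj_on_def)
  finally show ?thesis using U by simp
qed

lemma prod_option: "(\<Prod>k\<in>(UNIV::'n::finite option set). f k) = f None * (\<Prod>j\<in>UNIV. f (Some j))"
proof -
  have U: "(UNIV::'n option set) = insert None (range Some)" by (auto intro: option.exhaust)
  have "(\<Prod>k\<in>insert None (range Some). f k) = f None * prod f (range Some)" by (rule prod.insert) auto
  also have "prod f (range Some) = (\<Prod>j\<in>UNIV. f (Some j))" by (subst prod.reindex) (auto simp: inj_on_def)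
  finally show ?thesis using U by simp
qed

definition nz :: "('n::finite) option cpt \<Rightarrow> real" where
  "nz x = (\<Sum>j\<in>UNIV. (cmod (fst x $ Some j))\<^sup>2 + (cmod (snd x $ Some j))\<^sup>2)"
definition cc :: "('n::finite) option cpt \<Rightarrow> complex" where
  "cc x = (\<Sum>j\<in>UNIV. fst x $ Some j * cnj (snd x $ Some j))"

definition Zs :: "real \<Rightarrow> ('n::finite) option cpt set" where
  "Zs lam = {x. (cmod (fst x $ None))\<^sup>2 + (cmod (snd x $ None))\<^sup>2 = 2 * lam + nz x
               \<and> fst x $ None * cnj (snd x $ None) = cc x}"

lemma ker_beta_ex: "ker_beta (u_ex :: 'n::finite option \<Rightarrow> 'n \<Rightarrow> int) = {\<xi>. \<forall>j. \<xi> (Some j) = - \<xi> None}"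
proof -
  have "(\<Sum>k\<in>UNIV. \<xi> k * of_int (u_ex k j)) = \<xi> None + \<xi> (Some j)" for \<xi> :: "'n option \<Rightarrow> real" and j
  proof -
    have "(\<Sum>i\<in>UNIV. \<xi> (Some i) * of_int (u_ex (Some i) j)) = (\<Sum>i\<in>UNIV. if i = j then \<xi> (Some i) else 0)"
      by (rule sum.cong) (auto simp: u_ex_def)
    also have "\<dots> = \<xi> (Some j)" by simp
    finally show ?thesis by (simp add: sum_option u_ex_def)
  qed
  then show ?thesis unfolding ker_beta_def by (auto simp: algebra_simps eq_neg_iff_add_eq_0)
qed

lemma level_eq: "level_set (u_ex :: 'n::finite option \<Rightarrow> 'n \<Rightarrow> int) (l1_ex lam) (\<lambda>_. 0) = Zs lam"
proof -
  let ?m = "\<lambda>p k. (cmod (fst p $ k))\<^sup>2 + (cmod (snd p $ k))\<^sup>2"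
  have E1: "(\<Sum>k\<in>UNIV. ?m p k / 2 * \<xi> k + l1_ex lam k * \<xi> k) = \<xi> None * (?m p None / 2 - lam - nz p / 2)"
    if "\<forall>j. \<xi> (Some j) = - \<xi> None" for p :: "'n option cpt" and \<xi>
  proof -
    have "(\<Sum>j\<in>UNIV. ?m p (Some j) / 2 * \<xi> (Some j) + l1_ex lam (Some j) * \<xi> (Some j)) = (\<Sum>j\<in>UNIV. (- \<xi> None / 2) * ?m p (Some j))"
      by (rule sum.cong) (use that in \<open>auto simp: l1_ex_def\<close>)
    also have "\<dots> = (- \<xi> None / 2) * nz p" unfolding nz_def by (rule sum_distrib_left[symmetric])
    finally show ?thesis by (simp add: sum_option l1_ex_def algebra_simps)
  qed
  have E2: "(\<Sum>k\<in>UNIV. (\<i> * fst p $ k * cnj (snd p $ k) + 0) * of_real (\<xi> k)) = \<i> * of_real (\<xi> None) * (fst p $ None * cnj (snd p $ None) - cc p)"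
    if "\<forall>j. \<xi> (Some j) = - \<xi> None" for p :: "'n option cpt" and \<xi>
  proof -
    have "(\<Sum>j\<in>UNIV. (\<i> * fst p $ Some j * cnj (snd p $ Some j) + 0) * of_real (\<xi> (Some j))) = (\<Sum>j\<in>UNIV. (- \<i> * of_real (\<xi> None)) * (fst p $ Some j * cnj (snd p $ Some j)))"
      by (rule sum.cong) (use that in \<open>auto simp: algebra_simps\<close>)
    also have "\<dots> = (- \<i> * of_real (\<xi> None)) * cc p" unfolding cc_def by (rule sum_distrib_left[symmetric])
    finally show ?thesis by (simp add: sum_option algebra_simps)
  qed
  let ?x0 = "\<lambda>k::'n option. case k of None \<Rightarrow> (1::real) | Some _ \<Rightarrow> -1"
  have x0: "?x0 \<in> ker_beta (u_ex :: 'n::finite option \<Rightarrow> 'n \<Rightarrow> int)" by (simp add: ker_beta_ex)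
  show ?thesis
  proof (intro set_eqI iffI)
    fix p :: "'n option cpt" assume "p \<in> level_set u_ex (l1_ex lam) (\<lambda>_. 0)"
    then have "(\<Sum>k\<in>UNIV. ?m p k / 2 * ?x0 k + l1_ex lam k * ?x0 k) = 0 \<and>
       (\<Sum>k\<in>UNIV. (\<i> * fst p $ k * cnj (snd p $ k) + 0) * of_real (?x0 k)) = 0"
      using x0 unfolding level_set_def by blast
    then show "p \<in> Zs lam" unfolding Zs_def using E1[of ?x0 p] E2[of ?x0 p] by (auto simp: algebra_simps)
  next
    fix p :: "'n option cpt" assume Z: "p \<in> Zs lam"
    show "p \<in> level_set u_ex (l1_ex lam) (\<lambda>_. 0)"
      unfolding level_set_def
    proof (intro CollectI ballI conjI)
      fix \<xi> assume "\<xi> \<in> ker_beta (u_ex :: 'n::finite option \<Rightarrow> 'n \<Rightarrow> int)"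
      then have h: "\<forall>j. \<xi> (Some j) = - \<xi> None" by (simp add: ker_beta_ex)
      show "(\<Sum>k\<in>UNIV. ?m p k / 2 * \<xi> k + l1_ex lam k * \<xi> k) = 0"
        by (subst E1[OF h]) (use Z in \<open>simp add: Zs_def field_simps\<close>)
      show "(\<Sum>k\<in>UNIV. (\<i> * fst p $ k * cnj (snd p $ k) + 0) * of_real (\<xi> k)) = 0"
        by (subst E2[OF h]) (use Z in \<open>simp add: Zs_def\<close>)
    qed
  qed
qed

lemma kerN_ex: "kerN (u_ex :: 'n::finite option \<Rightarrow> 'n \<Rightarrow> int) = {t. cmod (t None) = 1 \<and> (\<forall>j. t (Some j) = cnj (t None))}"
proof -
  have P: "(\<Prod>k\<in>UNIV. t k powi (u_ex k j)) = t None * t (Some j)" for t :: "'n option \<Rightarrow> complex" and j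
  proof -
    have "(\<Prod>i\<in>UNIV. t (Some i) powi (u_ex (Some i) j)) = (\<Prod>i\<in>UNIV. if i = j then t (Some i) else 1)"
      by (rule prod.cong) (auto simp: u_ex_def)
    also have "\<dots> = t (Some j)" by simp
    finally show ?thesis by (simp add: prod_option u_ex_def)
  qed
  have C: "a * cnj a = 1" if "cmod a = 1" for a :: complex
    using that by (simp add: complex_mult_cnj cmod_power2 power2_eq_square[symmetric] complex_eq_iff)
      (metis cmod_power2 one_power2)
  show ?thesis
  proof (intro set_eqI iffI)
    fix t :: "'n option \<Rightarrow> complex" assume t: "t \<in> kerN (u_ex :: 'n::finite option \<Rightarrow> 'n \<Rightarrow> int)"
    then have n: "\<forall>k. cmod (t k) = 1" and p: "\<forall>j. t None * t (Some j) = 1" unfolding kerN_def using P by auto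
    have "t (Some j) = cnj (t None)" for j
    proof -
      have "t (Some j) = (t None * cnj (t None)) * t (Some j)" using C[of "t None"] n by simp
      also have "\<dots> = cnj (t None) * (t None * t (Some j))" by (simp add: algebra_simps)
      also have "\<dots> = cnj (t None)" using p by simp
      finally show ?thesis .
    qed
    then show "t \<in> {t. cmod (t None) = 1 \<and> (\<forall>j. t (Some j) = cnj (t None))}" using n by auto
  next
    fix t :: "'n option \<Rightarrow> complex" assume "t \<in> {t. cmod (t None) = 1 \<and> (\<forall>j. t (Some j) = cnj (t None))}"
    then have n: "cmod (t None) = 1" and s: "\<forall>j. t (Some j) = cnj (t None)" by auto
    have "cmod (t k) = 1" for k using n s by (cases k) auto
    then show "t \<in> kerN (u_ex :: 'n::finite option \<Rightarrow> 'n \<Rightarrow> int)" unfolding kerN_def using P s C[OF n] by auto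
  qed
qed

lemma gH_alt: "gH Y Y' = (\<Sum>k\<in>UNIV. Re (fst Y $ k) * Re (fst Y' $ k) + Im (fst Y $ k) * Im (fst Y' $ k)
     - Re (snd Y $ k) * Re (snd Y' $ k) - Im (snd Y $ k) * Im (snd Y' $ k))"
  unfolding gH_def by (simp add: Re_sum algebra_simps)

lemma gH_sym: "gH a b = gH b a"
  unfolding gH_alt by (simp add: algebra_simps)
lemma gH_add_left: "gH (a + b) c = gH a c + gH b c"
  unfolding gH_alt by (simp add: algebra_simps sum.distrib[symmetric])
lemma gH_add_right: "gH c (a + b) = gH c a + gH c b"
  using gH_add_left gH_sym by metis
lemma gH_scale_left: "gH (r *\<^sub>R a) c = r * gH a c"
  unfolding gH_alt by (simp add: algebra_simps sum_distrib_left)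
lemma gH_scale_right: "gH c (r *\<^sub>R a) = r * gH c a"
  using gH_scale_left gH_sym by metis
lemma gH_minus_left: "gH (- a) c = - gH a c"
  using gH_scale_left[of "-1" a c] by simp
lemma gH_minus_right: "gH c (- a) = - gH c a"
  using gH_scale_right[of c "-1" a] by simp
lemma gH_diff_left: "gH (a - b) c = gH a c - gH b c"
  using gH_add_left[of a "-b" c] gH_minus_left by simp
lemma gH_diff_right: "gH c (a - b) = gH c a - gH c b"
  using gH_add_right[of c a "-b"] gH_minus_right by simp
lemma gH_zero_left: "gH 0 c = 0"
  using gH_scale_left[of 0 c c] by simp

lemma gH_opI: "gH (opI a) (opI b) = gH a b"
  unfolding gH_alt opI_def by (simp add: algebra_simps)
lemma gH_opS: "gH (opS a) (opS b) = - gH a b"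
  unfolding gH_alt opS_def by (simp add: algebra_simps sum_subtractf sum.distrib)
lemma opI_opI: "opI (opI a) = - a"
  unfolding opI_def by (simp add: vec_eq_iff prod_eq_iff)
lemma opS_opS: "opS (opS a) = a"
  unfolding opS_def by simp
lemma opS_opI: "opS (opI a) = - opI (opS a)"
  unfolding opS_def opI_def by (simp add: vec_eq_iff prod_eq_iff)

lemma opI_add: "opI (a + b) = opI a + opI b" unfolding opI_def by (simp add: vec_eq_iff prod_eq_iff algebra_simps)
lemma opI_scale: "opI (r *\<^sub>R a) = r *\<^sub>R opI a" unfolding opI_def by (simp add: vec_eq_iff prod_eq_iff algebra_simps scaleR_conv_of_real)
lemma opS_add: "opS (a + b) = opS a + opS b" unfolding opS_def by simp
lemma opS_scale: "opS (r *\<^sub>R a) = r *\<^sub>R opS a" unfolding opS_def by simp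
lemma linear_opI: "linear opI" by (rule linearI) (simp_all add: opI_add opI_scale)
lemma linear_opS: "linear opS" by (rule linearI) (simp_all add: opS_add opS_scale)
lemma linear_opT: "linear opT" unfolding opT_def[abs_def]
  using linear_compose[OF linear_opS linear_opI] by (simp add: o_def)

lemma opI_minus: "opI (- a) = - opI a" using opI_scale[of "-1" a] by simp
lemma opS_minus: "opS (- a) = - opS a" using opS_scale[of "-1" a] by simp

lemma gH_opI_anti: "gH (opI a) b = - gH a (opI b)"
  using gH_opI[of a "opI b"] by (simp add: opI_opI gH_minus_right)
lemma gH_opS_anti: "gH (opS a) b = - gH a (opS b)"
  using gH_opS[of a "opS b"] by (simp add: opS_opS)
lemma gH_opT_anti: "gH (opT a) b = - gH a (opT b)"
  unfolding opT_def using gH_opI_anti gH_opS_anti opS_opI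
  by (metis gH_minus_right minus_minus)
lemma gH_opI_self: "gH (opI a) a = 0" using gH_opI_anti[of a a] gH_sym[of a "opI a"] by simp
lemma gH_opS_self: "gH (opS a) a = 0" using gH_opS_anti[of a a] gH_sym[of a "opS a"] by simp
lemma gH_opT_self: "gH (opT a) a = 0" using gH_opT_anti[of a a] gH_sym[of a "opT a"] by simp

lemma gH_nondeg: assumes "\<forall>e. gH a e = 0" shows "a = 0"
proof -
  have "gH a (fst a, - snd a) = 0" using assms by blast
  then have "(\<Sum>k\<in>UNIV. (Re (fst a $ k))\<^sup>2 + (Im (fst a $ k))\<^sup>2 + (Re (snd a $ k))\<^sup>2 + (Im (snd a $ k))\<^sup>2) = 0"
    unfolding gH_alt by (simp add: power2_eq_square)
  then have "\<forall>k\<in>UNIV. (Re (fst a $ k))\<^sup>2 + (Im (fst a $ k))\<^sup>2 + (Re (snd a $ k))\<^sup>2 + (Im (snd a $ k))\<^sup>2 = 0"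
    by (subst sum_nonneg_eq_0_iff[symmetric]) auto
  then have "\<forall>k. fst a $ k = 0 \<and> snd a $ k = 0"
    by (auto simp: complex_eq_iff add_nonneg_eq_0_iff)
  then show ?thesis by (simp add: prod_eq_iff vec_eq_iff)
qed

definition sg :: "'n::finite option \<Rightarrow> real" where "sg k = (case k of None \<Rightarrow> 1 | Some _ \<Rightarrow> -1)"
definition Jg :: "'n::finite option cpt \<Rightarrow> 'n option cpt" where
  "Jg x = ((\<chi> k. \<i> * of_real (sg k) * fst x $ k), (\<chi> k. \<i> * of_real (sg k) * snd x $ k))"

lemma cmod_sq: "cmod a * cmod a = Re a * Re a + Im a * Im a"
  using cmod_power2[of a] by (simp add: power2_eq_square)

lemma Jg_add: "Jg (a + b) = Jg a + Jg b" unfolding Jg_def by (simp add: vec_eq_iff prod_eq_iff algebra_simps)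
lemma Jg_scale: "Jg (r *\<^sub>R a) = r *\<^sub>R Jg a" unfolding Jg_def by (simp add: vec_eq_iff prod_eq_iff algebra_simps scaleR_conv_of_real)
lemma linear_Jg: "linear Jg" by (rule linearI) (simp_all add: Jg_add Jg_scale)

lemma QI_eq: "gH (opI (Jg x)) x = nz x - ((cmod (fst x $ None))\<^sup>2 + (cmod (snd x $ None))\<^sup>2)"
  unfolding gH_alt opI_def Jg_def nz_def
  by (simp add: sum_option sg_def power2_eq_square cmod_sq algebra_simps sum.distrib sum_subtractf sum_negf)

lemma QS_eq: "gH (opS (Jg x)) x = 2 * Im (fst x $ None * cnj (snd x $ None) - cc x)"
  unfolding gH_alt opS_def Jg_def cc_def
  by (simp add: sum_option sg_def Im_sum algebra_simps sum.distrib sum_subtractf sum_negf sum_distrib_left)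

lemma QT_eq: "gH (opT (Jg x)) x = - 2 * Re (fst x $ None * cnj (snd x $ None) - cc x)"
  unfolding gH_alt opT_def opI_def opS_def Jg_def cc_def
  by (simp add: sum_option sg_def Re_sum algebra_simps sum.distrib sum_subtractf sum_negf sum_distrib_left)

lemma Zs_Q: "p \<in> Zs lam \<longleftrightarrow> gH (opI (Jg p)) p = - 2 * lam \<and> gH (opS (Jg p)) p = 0 \<and> gH (opT (Jg p)) p = 0"
  unfolding Zs_def QI_eq QS_eq QT_eq by (auto simp: complex_eq_iff)

lemma QI_sym: "gH (opI (Jg x)) y = gH (opI (Jg y)) x"
  unfolding gH_alt opI_def Jg_def by (simp add: sg_def algebra_simps)
lemma QS_sym: "gH (opS (Jg x)) y = gH (opS (Jg y)) x"
  unfolding gH_alt opS_def Jg_def by (rule sum.cong[OF refl]) (simp add: sg_def algebra_simps split: option.splits)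
lemma QT_sym: "gH (opT (Jg x)) y = gH (opT (Jg y)) x"
  unfolding gH_alt opT_def opI_def opS_def Jg_def by (rule sum.cong[OF refl]) (simp add: sg_def algebra_simps split: option.splits)

lemma q_eq: "gH (Jg x) (Jg x) = (cmod (fst x $ None))\<^sup>2 - (cmod (snd x $ None))\<^sup>2
     + (\<Sum>j\<in>UNIV. (cmod (fst x $ Some j))\<^sup>2 - (cmod (snd x $ Some j))\<^sup>2)"
  unfolding gH_alt Jg_def
  by (simp add: sum_option sg_def power2_eq_square cmod_sq algebra_simps)

definition nA :: "('n::finite) option cpt \<Rightarrow> real" where
  "nA x = (\<Sum>j\<in>UNIV. (cmod (fst x $ Some j))\<^sup>2)"
definition nB :: "('n::finite) option cpt \<Rightarrow> real" where
  "nB x = (\<Sum>j\<in>UNIV. (cmod (snd x $ Some j))\<^sup>2)"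

lemma nz_AB: "nz x = nA x + nB x" unfolding nz_def nA_def nB_def by (simp add: sum.distrib)
lemma nA_nonneg: "nA x \<ge> 0" unfolding nA_def by (simp add: sum_nonneg)
lemma nB_nonneg: "nB x \<ge> 0" unfolding nB_def by (simp add: sum_nonneg)

lemma cc_bound: "(cmod (cc x))\<^sup>2 \<le> nA x * nB x"
proof -
  have "cmod (cc x) \<le> (\<Sum>j\<in>UNIV. cmod (fst x $ Some j) * cmod (snd x $ Some j))"
    unfolding cc_def by (rule order_trans[OF norm_sum]) (simp add: norm_mult)
  then have "(cmod (cc x))\<^sup>2 \<le> (\<Sum>j\<in>UNIV. cmod (fst x $ Some j) * cmod (snd x $ Some j))\<^sup>2"
    by (simp add: power_mono)
  also have "\<dots> \<le> nA x * nB x" unfolding nA_def nB_def by (rule Cauchy_Schwarz_ineq_sum)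
  finally show ?thesis .
qed

lemma real_ineq1:
  fixes P Q A B lam :: real
  assumes "P \<ge> 0" "Q \<ge> 0" "A \<ge> 0" "B \<ge> 0" "lam > 0" "P + Q = 2 * lam + A + B" "P * Q \<le> A * B"
  shows "P \<noteq> Q"
proof
  assume e: "P = Q"
  have "A * B \<le> ((A + B) / 2)\<^sup>2" using sum_squares_bound[of A B] by (simp add: power2_eq_square field_simps)
  moreover have "P > (A + B) / 2" using assms e by simp
  then have "P\<^sup>2 > ((A + B) / 2)\<^sup>2" using assms by (intro power_strict_mono) auto
  ultimately show False using assms e by (simp add: power2_eq_square)
qed

lemma real_ineq2:
  fixes P Q A B lam :: real
  assumes "P \<ge> 0" "Q \<ge> 0" "A \<ge> 0" "B \<ge> 0" "lam > 0" "P + Q = 2 * lam + A + B" "P * Q \<le> A * B"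
  shows "P - Q + A - B \<noteq> 0"
proof
  assume e: "P - Q + A - B = 0"
  have "(P + Q)\<^sup>2 = (P - Q)\<^sup>2 + 4 * (P * Q)" by (simp add: power2_eq_square algebra_simps)
  also have "\<dots> \<le> (B - A)\<^sup>2 + 4 * (A * B)"
  proof -
    have "P - Q = B - A" using e by linarith
    then show ?thesis using assms(7) by simp
  qed
  also have "\<dots> = (A + B)\<^sup>2" by (simp add: power2_eq_square algebra_simps)
  finally have "(P + Q)\<^sup>2 \<le> (A + B)\<^sup>2" .
  moreover have "(P + Q)\<^sup>2 > (A + B)\<^sup>2" using assms by (intro power_strict_mono) auto
  ultimately show False by simp
qed

lemma real_ineq3:
  fixes A B C lam :: real
  assumes "A \<ge> 0" "B \<ge> 0" "lam > 0" "C \<le> A * B"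
  shows "(2 * lam + A + B)\<^sup>2 - 4 * C > 0"
proof -
  have "4 * (A * B) \<le> (A + B)\<^sup>2" using sum_squares_bound[of A B] by (simp add: power2_eq_square algebra_simps)
  moreover have "(2 * lam + A + B)\<^sup>2 > (A + B)\<^sup>2" using assms by (intro power_strict_mono) auto
  ultimately show ?thesis using assms by linarith
qed

lemma Zs_PQ:
  assumes "p \<in> Zs lam"
  shows "(cmod (fst p $ None))\<^sup>2 + (cmod (snd p $ None))\<^sup>2 = 2 * lam + nA p + nB p"
    and "(cmod (fst p $ None))\<^sup>2 * (cmod (snd p $ None))\<^sup>2 = (cmod (cc p))\<^sup>2"
proof -
  show "(cmod (fst p $ None))\<^sup>2 + (cmod (snd p $ None))\<^sup>2 = 2 * lam + nA p + nB p"
    using assms by (simp add: Zs_def nz_AB)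
  have "cc p = fst p $ None * cnj (snd p $ None)" using assms by (simp add: Zs_def)
  then show "(cmod (fst p $ None))\<^sup>2 * (cmod (snd p $ None))\<^sup>2 = (cmod (cc p))\<^sup>2"
    by (simp add: norm_mult power_mult_distrib)
qed

lemma Zs_neq:
  assumes "p \<in> Zs lam" "lam > 0"
  shows "cmod (fst p $ None) \<noteq> cmod (snd p $ None)"
proof
  assume e: "cmod (fst p $ None) = cmod (snd p $ None)"
  have "(cmod (fst p $ None))\<^sup>2 \<noteq> (cmod (snd p $ None))\<^sup>2"
    using real_ineq1[OF _ _ nA_nonneg nB_nonneg assms(2) Zs_PQ(1)[OF assms(1)]] Zs_PQ(2)[OF assms(1)] cc_bound[of p]
    by simp
  then show False using e by simp
qed

lemma Zs_q:
  assumes "p \<in> Zs lam" "lam > 0"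
  shows "gH (Jg p) (Jg p) \<noteq> 0"
proof -
  have "gH (Jg p) (Jg p) = (cmod (fst p $ None))\<^sup>2 - (cmod (snd p $ None))\<^sup>2 + nA p - nB p"
    unfolding q_eq nA_def nB_def by (simp add: sum_subtractf)
  then show ?thesis
    using real_ineq2[OF _ _ nA_nonneg nB_nonneg assms(2) Zs_PQ(1)[OF assms(1)]] Zs_PQ(2)[OF assms(1)] cc_bound[of p]
    by simp
qed

lemma disc_pos:
  assumes "lam > 0"
  shows "(2 * lam + nA x + nB x)\<^sup>2 - 4 * (cmod (cc x))\<^sup>2 > 0"
  by (rule real_ineq3[OF nA_nonneg nB_nonneg assms cc_bound])

definition tN :: "complex \<Rightarrow> 'n::finite option \<Rightarrow> complex" where
  "tN s k = (case k of None \<Rightarrow> s | Some _ \<Rightarrow> cnj s)"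

lemma unit_cnj: "cmod s = 1 \<Longrightarrow> s * cnj s = 1"
  by (metis complex_mod_mult_cnj complex_norm_square mult.commute norm_one of_real_1 one_power2 power2_eq_square)
lemma unit_cnj': "cmod s = 1 \<Longrightarrow> cnj s * s = 1"
  using unit_cnj by (simp add: mult.commute)

lemma unit_rot1: "cmod s = 1 \<Longrightarrow> cnj s * a * cnj (cnj s * b) = a * cnj b"
proof -
  assume s: "cmod s = 1"
  have "cnj s * a * cnj (cnj s * b) = (cnj s * s) * (a * cnj b)" by (simp add: algebra_simps)
  then show ?thesis using unit_cnj'[OF s] by simp
qed
lemma unit_rot2: "cmod s = 1 \<Longrightarrow> s * a * cnj (s * b) = a * cnj b"
proof -
  assume s: "cmod s = 1"
  have "s * a * cnj (s * b) = (s * cnj s) * (a * cnj b)" by (simp add: algebra_simps)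
  then show ?thesis using unit_cnj[OF s] by simp
qed

lemma N_eq: "kerN (u_ex :: 'n::finite option \<Rightarrow> 'n \<Rightarrow> int) = tN ` {s. cmod s = 1}"
proof (intro set_eqI iffI)
  fix t :: "'n option \<Rightarrow> complex" assume "t \<in> kerN u_ex"
  then have t: "cmod (t None) = 1" "\<forall>j. t (Some j) = cnj (t None)" by (auto simp: kerN_ex)
  then have "t = tN (t None)" by (auto simp: tN_def fun_eq_iff split: option.splits)
  then show "t \<in> tN ` {s. cmod s = 1}" using t by blast
next
  fix t :: "'n option \<Rightarrow> complex" assume "t \<in> tN ` {s. cmod s = 1}"
  then show "t \<in> kerN u_ex" by (auto simp: kerN_ex tN_def)
qed

lemma act_comp: "torus_act t (torus_act t' p) = torus_act (\<lambda>k. t k * t' k) p"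
  unfolding torus_act_def by (simp add: vec_eq_iff algebra_simps)

lemma tN_mult: "(\<lambda>k. tN s k * tN s' k) = tN (s * s')"
  by (auto simp: tN_def fun_eq_iff split: option.splits)

lemma act_tN1: "torus_act (tN 1) p = p"
  unfolding torus_act_def tN_def by (simp add: vec_eq_iff prod_eq_iff split: option.splits)

lemma act_fst_None: "fst (torus_act (tN s) p) $ None = s * fst p $ None"
  by (simp add: torus_act_def tN_def)
lemma act_snd_None: "snd (torus_act (tN s) p) $ None = s * snd p $ None"
  by (simp add: torus_act_def tN_def)
lemma act_fst_Some: "fst (torus_act (tN s) p) $ Some j = cnj s * fst p $ Some j"
  by (simp add: torus_act_def tN_def)
lemma act_snd_Some: "snd (torus_act (tN s) p) $ Some j = cnj s * snd p $ Some j"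
  by (simp add: torus_act_def tN_def)

lemma act_nA: "cmod s = 1 \<Longrightarrow> nA (torus_act (tN s) p) = nA p"
  by (simp add: nA_def act_fst_Some norm_mult)
lemma act_nB: "cmod s = 1 \<Longrightarrow> nB (torus_act (tN s) p) = nB p"
  by (simp add: nB_def act_snd_Some norm_mult)
lemma act_nz: "cmod s = 1 \<Longrightarrow> nz (torus_act (tN s) p) = nz p"
  by (simp add: nz_AB act_nA act_nB)
lemma act_cc: "cmod s = 1 \<Longrightarrow> cc (torus_act (tN s) p) = cc p"
  unfolding cc_def act_fst_Some act_snd_Some by (simp only: unit_rot1)

lemma act_Zs: "cmod s = 1 \<Longrightarrow> p \<in> Zs lam \<Longrightarrow> torus_act (tN s) p \<in> Zs lam"
proof -
  assume s: "cmod s = 1" and p: "p \<in> Zs lam"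
  have e: "fst (torus_act (tN s) p) $ None * cnj (snd (torus_act (tN s) p) $ None) = fst p $ None * cnj (snd p $ None)"
    unfolding act_fst_None act_snd_None by (rule unit_rot2[OF s])
  show ?thesis using p s unfolding Zs_def mem_Collect_eq e
    by (simp add: act_nz act_cc norm_mult act_fst_None act_snd_None)
qed

lemma free_action:
  assumes "p \<in> Zs lam" "lam > 0" "t \<in> kerN (u_ex :: 'n::finite option \<Rightarrow> 'n \<Rightarrow> int)" "torus_act t p = p"
  shows "t = (\<lambda>_. 1)"
proof -
  obtain s where s: "cmod s = 1" "t = tN s" using assms(3) N_eq by blast
  have ne: "fst p $ None \<noteq> 0 \<or> snd p $ None \<noteq> 0" using Zs_neq[OF assms(1,2)] by auto
  have "s * fst p $ None = fst p $ None" "s * snd p $ None = snd p $ None"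
    using assms(4) s(2) act_fst_None[of s p] act_snd_None[of s p] by simp_all
  then have "s = 1" using ne by auto
  then show ?thesis using s(2) by (auto simp: tN_def fun_eq_iff split: option.splits)
qed

lemma orbit_eq: "orbit (kerN (u_ex :: 'n::finite option \<Rightarrow> 'n \<Rightarrow> int)) p = {torus_act (tN s) p | s. cmod s = 1}"
  unfolding orbit_def N_eq by auto

lemma torus_linear: "linear (torus_act t)"
  by (rule linearI) (simp_all add: torus_act_def vec_eq_iff algebra_simps scaleR_conv_of_real)

lemma rho_facts:
  fixes R C :: real
  assumes "C \<ge> 0" "R > 0" "R\<^sup>2 - 4 * C > 0"
  defines "\<rho> \<equiv> (R + sqrt (R\<^sup>2 - 4 * C)) / 2"
  shows "\<rho> > 0" "\<rho>\<^sup>2 + C = R * \<rho>" "C < \<rho>\<^sup>2"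
proof -
  let ?D = "R\<^sup>2 - 4 * C"
  have sD: "(sqrt ?D)\<^sup>2 = ?D" using assms by simp
  have sDp: "sqrt ?D > 0" using assms by simp
  have "R + sqrt ?D > 0" using assms(2) sDp by linarith
  then show "\<rho> > 0" unfolding \<rho>_def by simp
  show e: "\<rho>\<^sup>2 + C = R * \<rho>" unfolding \<rho>_def using sD by (simp add: power2_eq_square field_simps)
  have "\<rho>\<^sup>2 - C = \<rho> * sqrt ?D" unfolding \<rho>_def using sD by (simp add: power2_eq_square field_simps)
  moreover have "\<rho> * sqrt ?D > 0" using \<open>\<rho> > 0\<close> sDp by simp
  ultimately show "C < \<rho>\<^sup>2" by simp
qed

lemma root_id:
  fixes P Q :: real
  assumes "P > Q" "Q \<ge> 0"
  shows "((P + Q) + sqrt ((P + Q)\<^sup>2 - 4 * (P * Q))) / 2 = P"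
proof -
  have "(P + Q)\<^sup>2 - 4 * (P * Q) = (P - Q)\<^sup>2" by (simp add: power2_eq_square algebra_simps)
  then have "sqrt ((P + Q)\<^sup>2 - 4 * (P * Q)) = P - Q" using assms by simp
  then show ?thesis by simp
qed

definition zs :: "real^('n::finite \<times> 4) \<Rightarrow> 'n \<Rightarrow> complex" where
  "zs x j = Complex (x $ (j, 1)) (x $ (j, 2))"
definition ws :: "real^('n::finite \<times> 4) \<Rightarrow> 'n \<Rightarrow> complex" where
  "ws x j = Complex (x $ (j, 3)) (x $ (j, 4))"
definition pre :: "real^('n::finite \<times> 4) \<Rightarrow> 'n option cpt" where
  "pre x = ((\<chi> k. case k of None \<Rightarrow> 0 | Some j \<Rightarrow> zs x j), (\<chi> k. case k of None \<Rightarrow> 0 | Some j \<Rightarrow> ws x j))"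
definition RR :: "real \<Rightarrow> real^('n::finite \<times> 4) \<Rightarrow> real" where
  "RR lam x = 2 * lam + nA (pre x) + nB (pre x)"
definition rho :: "real \<Rightarrow> real^('n::finite \<times> 4) \<Rightarrow> real" where
  "rho lam x = (RR lam x + sqrt ((RR lam x)\<^sup>2 - 4 * (cmod (cc (pre x)))\<^sup>2)) / 2"
definition rr :: "real \<Rightarrow> real^('n::finite \<times> 4) \<Rightarrow> real" where
  "rr lam x = sqrt (rho lam x)"

definition sec :: "real \<Rightarrow> bool \<Rightarrow> real^('n::finite \<times> 4) \<Rightarrow> 'n option cpt" where
  "sec lam b x = ((\<chi> k. case k of None \<Rightarrow> (if b then of_real (rr lam x) else cc (pre x) / of_real (rr lam x)) | Some j \<Rightarrow> zs x j),
                 (\<chi> k. case k of None \<Rightarrow> (if b then cnj (cc (pre x)) / of_real (rr lam x) else of_real (rr lam x)) | Some j \<Rightarrow> ws x j))"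

definition qb :: "'n::finite option cpt \<Rightarrow> bool" where
  "qb p \<longleftrightarrow> cmod (snd p $ None) < cmod (fst p $ None)"
definition uu :: "'n::finite option cpt \<Rightarrow> complex" where
  "uu p = (if qb p then fst p $ None / of_real (cmod (fst p $ None)) else snd p $ None / of_real (cmod (snd p $ None)))"
definition qx :: "'n::finite option cpt \<Rightarrow> real^('n \<times> 4)" where
  "qx p = (\<chi> i. case i of (j, m) \<Rightarrow>
      (if m = 1 then Re (uu p * fst p $ Some j) else if m = 2 then Im (uu p * fst p $ Some j)
       else if m = 3 then Re (uu p * snd p $ Some j) else Im (uu p * snd p $ Some j)))"

lemma nA_sec: "nA (sec lam b x) = nA (pre x)" by (simp add: nA_def sec_def pre_def)
lemma nB_sec: "nB (sec lam b x) = nB (pre x)" by (simp add: nB_def sec_def pre_def)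
lemma cc_sec: "cc (sec lam b x) = cc (pre x)" by (simp add: cc_def sec_def pre_def)

lemma rho_props:
  assumes "lam > 0"
  shows "rho lam x > 0" "(rho lam x)\<^sup>2 + (cmod (cc (pre x)))\<^sup>2 = RR lam x * rho lam x" "(cmod (cc (pre x)))\<^sup>2 < (rho lam x)\<^sup>2"
proof -
  have R: "RR lam x > 0" unfolding RR_def using assms nA_nonneg nB_nonneg by (smt (verit))
  have D: "(RR lam x)\<^sup>2 - 4 * (cmod (cc (pre x)))\<^sup>2 > 0" unfolding RR_def using disc_pos[OF assms] by simp
  note F = rho_facts[OF _ R D, folded rho_def[of lam x]]
  show "rho lam x > 0" "(rho lam x)\<^sup>2 + (cmod (cc (pre x)))\<^sup>2 = RR lam x * rho lam x" "(cmod (cc (pre x)))\<^sup>2 < (rho lam x)\<^sup>2"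
    using F by auto
qed

lemma rr_props:
  assumes "lam > 0"
  shows "rr lam x > 0" "(rr lam x)\<^sup>2 = rho lam x"
proof -
  have "rho lam x > 0" by (rule rho_props(1)[OF assms])
  then show "rr lam x > 0" "(rr lam x)\<^sup>2 = rho lam x" by (simp_all add: rr_def)
qed

lemma sec_Zs:
  assumes "lam > 0"
  shows "sec lam b x \<in> Zs lam"
proof -
  let ?r = "rr lam x" and ?c = "cc (pre x)" and ?\<rho> = "rho lam x"
  have r: "?r > 0" "?r\<^sup>2 = ?\<rho>" using rr_props[OF assms] by auto
  have rp: "?\<rho> > 0" "?\<rho>\<^sup>2 + (cmod ?c)\<^sup>2 = RR lam x * ?\<rho>" using rho_props[OF assms] by auto
  have sum: "?\<rho> + (cmod ?c)\<^sup>2 / ?\<rho> = RR lam x" using rp by (simp add: field_simps power2_eq_square)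
  have n1: "(cmod (of_real ?r :: complex))\<^sup>2 = ?\<rho>" using r by simp
  have n2: "(cmod (?c / of_real ?r))\<^sup>2 = (cmod ?c)\<^sup>2 / ?\<rho>" using r by (simp add: norm_divide power_divide)
  have n3: "(cmod (cnj ?c / of_real ?r))\<^sup>2 = (cmod ?c)\<^sup>2 / ?\<rho>" using r by (simp add: norm_divide power_divide)
  have p1: "of_real ?r * cnj (cnj ?c / of_real ?r) = ?c" using r by (simp add: field_simps)
  have p2: "?c / of_real ?r * cnj (of_real ?r) = ?c" using r by (simp add: field_simps)
  show ?thesis
    unfolding Zs_def mem_Collect_eq nz_AB nA_sec nB_sec cc_sec
    using sum n1 n2 n3 p1 p2 by (cases b) (auto simp: sec_def RR_def)
qed

lemma qb_sec:
  assumes "lam > 0"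
  shows "qb (sec lam b x) = b"
proof -
  let ?r = "rr lam x" and ?c = "cc (pre x)" and ?\<rho> = "rho lam x"
  have r: "?r > 0" "?r\<^sup>2 = ?\<rho>" using rr_props[OF assms] by auto
  have lt: "(cmod ?c)\<^sup>2 < ?\<rho>\<^sup>2" using rho_props[OF assms] by auto
  have "cmod ?c < ?\<rho>" using lt rho_props(1)[OF assms] by (meson abs_le_square_iff abs_of_nonneg norm_ge_zero not_le less_imp_le power2_less_imp_less)
  then have lt2: "cmod ?c / ?r < ?r" using r by (simp add: field_simps power2_eq_square)
  show ?thesis using lt2 r by (cases b) (auto simp: qb_def sec_def norm_divide)
qed

lemma qx_sec:
  assumes "lam > 0"
  shows "qx (sec lam b x) = x"
proof -
  have r: "rr lam x > 0" using rr_props[OF assms] by auto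
  have u: "uu (sec lam b x) = 1"
    using r qb_sec[OF assms, of b x] by (cases b) (auto simp: uu_def sec_def)
  show ?thesis
    unfolding vec_eq_iff
  proof
    fix i :: "'a \<times> 4"
    obtain j m where i: "i = (j, m)" by (cases i)
    have "m = 1 \<or> m = 2 \<or> m = 3 \<or> m = 4" by (rule exhaust_4)
    then show "qx (sec lam b x) $ i = x $ i"
      unfolding i qx_def using u by (auto simp: sec_def zs_def ws_def)
  qed
qed

lemma uu_unit:
  assumes "p \<in> Zs lam" "lam > 0"
  shows "cmod (uu p) = 1"
proof -
  have ne: "cmod (fst p $ None) \<noteq> cmod (snd p $ None)" by (rule Zs_neq[OF assms])
  show ?thesis
  proof (cases "qb p")
    case True
    then have "fst p $ None \<noteq> 0" unfolding qb_def by auto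
    then show ?thesis using True by (simp add: uu_def norm_divide)
  next
    case False
    then have "snd p $ None \<noteq> 0" using ne unfolding qb_def by auto
    then show ?thesis using False by (simp add: uu_def norm_divide)
  qed
qed

lemma qb_act: "cmod s = 1 \<Longrightarrow> qb (torus_act (tN s) p) = qb p"
  by (simp add: qb_def act_fst_None act_snd_None norm_mult)

lemma uu_act: "cmod s = 1 \<Longrightarrow> uu (torus_act (tN s) p) = s * uu p"
  by (simp add: uu_def qb_act act_fst_None act_snd_None norm_mult)

lemma qx_act: "cmod s = 1 \<Longrightarrow> qx (torus_act (tN s) p) = qx p"
proof -
  assume s: "cmod s = 1"
  have e: "s * u * (cnj s * a) = u * a" for u a
  proof -
    have "s * u * (cnj s * a) = (s * cnj s) * (u * a)" by (simp add: algebra_simps)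
    then show ?thesis using unit_cnj[OF s] by simp
  qed
  show ?thesis unfolding qx_def uu_act[OF s] act_fst_Some act_snd_Some e ..
qed

lemma recon:
  assumes "p \<in> Zs lam" "lam > 0"
  shows "p = torus_act (tN (uu p)) (sec lam (qb p) (qx p))"
proof -
  let ?u = "uu p" and ?x = "qx p"
  have u1: "cmod ?u = 1" by (rule uu_unit[OF assms])
  have zs: "zs ?x j = ?u * fst p $ Some j" for j unfolding zs_def qx_def by (simp add: complex_eq_iff)
  have ws: "ws ?x j = ?u * snd p $ Some j" for j unfolding ws_def qx_def by (simp add: complex_eq_iff)
  have "cc (pre ?x) = (\<Sum>j\<in>UNIV. ?u * fst p $ Some j * cnj (?u * snd p $ Some j))" unfolding cc_def pre_def by (simp add: zs ws)
  also have "\<dots> = cc p" unfolding cc_def by (simp only: unit_rot2[OF u1])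
  finally have ccp: "cc (pre ?x) = cc p" .
  have nAp: "nA (pre ?x) = nA p" unfolding nA_def pre_def by (simp add: zs norm_mult u1)
  have nBp: "nB (pre ?x) = nB p" unfolding nB_def pre_def by (simp add: ws norm_mult u1)
  let ?P = "(cmod (fst p $ None))\<^sup>2" and ?Q = "(cmod (snd p $ None))\<^sup>2"
  have R: "RR lam ?x = ?P + ?Q" unfolding RR_def nAp nBp using Zs_PQ(1)[OF assms(1)] by simp
  have C: "(cmod (cc (pre ?x)))\<^sup>2 = ?P * ?Q" unfolding ccp using Zs_PQ(2)[OF assms(1)] by simp
  have ccz: "cc p = fst p $ None * cnj (snd p $ None)" using assms(1) by (simp add: Zs_def)
  have Some: "cnj ?u * (?u * a) = a" for a using unit_cnj'[OF u1] by (simp add: mult.assoc[symmetric])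
  show ?thesis
  proof (cases "qb p")
    case True
    then have PQ: "?P > ?Q" unfolding qb_def by (simp add: power_strict_mono)
    have rho: "rho lam ?x = ?P" unfolding rho_def R C by (rule root_id[OF PQ]) simp
    have rr: "rr lam ?x = cmod (fst p $ None)" unfolding rr_def rho by simp
    have z0: "fst p $ None \<noteq> 0" using True unfolding qb_def by auto
    have uval: "?u = fst p $ None / of_real (cmod (fst p $ None))" using True by (simp add: uu_def)
    have N1: "?u * of_real (cmod (fst p $ None)) = fst p $ None" using z0 uval by simp
    have N2: "?u * (cnj (cc p) / of_real (cmod (fst p $ None))) = snd p $ None"
    proof -
      have "?u * (cnj (cc p) / of_real (cmod (fst p $ None))) = (fst p $ None * cnj (fst p $ None)) * snd p $ None / (of_real (cmod (fst p $ None)))\<^sup>2"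
        unfolding uval ccz by (simp add: field_simps power2_eq_square)
      also have "\<dots> = snd p $ None"
      proof -
        have h: "fst p $ None * cnj (fst p $ None) = (of_real (cmod (fst p $ None)))\<^sup>2"
          using complex_norm_square[of "fst p $ None"] by simp
        show ?thesis by (simp only: h) (simp add: z0)
      qed
      finally show ?thesis .
    qed
    show ?thesis using True N1 N2 Some unfolding torus_act_def sec_def rr ccp
      by (auto simp: tN_def vec_eq_iff prod_eq_iff zs ws split: option.splits)
  next
    case False
    have ne: "cmod (fst p $ None) \<noteq> cmod (snd p $ None)" by (rule Zs_neq[OF assms])
    then have PQ: "?Q > ?P" using False unfolding qb_def by (simp add: power_strict_mono)
    have rho: "rho lam ?x = ?Q" unfolding rho_def R C using root_id[OF PQ] by (simp add: algebra_simps)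
    have rr: "rr lam ?x = cmod (snd p $ None)" unfolding rr_def rho by simp
    have w0: "snd p $ None \<noteq> 0" using PQ by auto
    have uval: "?u = snd p $ None / of_real (cmod (snd p $ None))" using False by (simp add: uu_def)
    have N1: "?u * of_real (cmod (snd p $ None)) = snd p $ None" using w0 uval by simp
    have N2: "?u * (cc p / of_real (cmod (snd p $ None))) = fst p $ None"
    proof -
      have "?u * (cc p / of_real (cmod (snd p $ None))) = (snd p $ None * cnj (snd p $ None)) * fst p $ None / (of_real (cmod (snd p $ None)))\<^sup>2"
        unfolding uval ccz by (simp add: field_simps power2_eq_square)
      also have "\<dots> = fst p $ None"
      proof -
        have h: "snd p $ None * cnj (snd p $ None) = (of_real (cmod (snd p $ None)))\<^sup>2"
          using complex_norm_square[of "snd p $ None"] by simp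
        show ?thesis by (simp only: h) (simp add: w0)
      qed
      finally show ?thesis .
    qed
    show ?thesis using False N1 N2 Some unfolding torus_act_def sec_def rr ccp
      by (auto simp: tN_def vec_eq_iff prod_eq_iff zs ws split: option.splits)
  qed
qed

lemma fiber:
  assumes "p \<in> Zs lam" "p' \<in> Zs lam" "lam > 0"
  shows "(qb p' = qb p \<and> qx p' = qx p) \<longleftrightarrow> p' \<in> orbit (kerN (u_ex :: 'n::finite option \<Rightarrow> 'n \<Rightarrow> int)) p"
proof
  assume "p' \<in> orbit (kerN (u_ex :: 'n::finite option \<Rightarrow> 'n \<Rightarrow> int)) p"
  then obtain s where s: "cmod s = 1" "p' = torus_act (tN s) p" unfolding orbit_eq by blast
  then show "qb p' = qb p \<and> qx p' = qx p" by (simp add: qb_act qx_act)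
next
  assume e: "qb p' = qb p \<and> qx p' = qx p"
  let ?S = "sec lam (qb p) (qx p)"
  have p: "p = torus_act (tN (uu p)) ?S" by (rule recon[OF assms(1,3)])
  have p': "p' = torus_act (tN (uu p')) ?S" using recon[OF assms(2,3)] e by simp
  have u: "cmod (uu p) = 1" "cmod (uu p') = 1" using uu_unit assms by blast+
  have "torus_act (tN (uu p' * cnj (uu p))) p = torus_act (tN (uu p' * cnj (uu p) * uu p)) ?S"
    by (subst p) (simp add: act_comp tN_mult)
  also have "uu p' * cnj (uu p) * uu p = uu p'" using unit_cnj'[OF u(1)] by (simp add: mult.assoc)
  finally have "p' = torus_act (tN (uu p' * cnj (uu p))) p" using p' by simp
  moreover have "cmod (uu p' * cnj (uu p)) = 1" using u by (simp add: norm_mult)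
  ultimately show "p' \<in> orbit (kerN u_ex) p" unfolding orbit_eq by blast
qed

lemma sigma_Zs:
  assumes "p \<in> Zs lam"
  shows "sigma p \<in> Zs lam"
proof -
  have n: "nz (sigma p) = nz p" unfolding nz_def sigma_def by (simp add: add.commute)
  have c: "cc (sigma p) = cc p" unfolding cc_def sigma_def by (simp add: mult.commute)
  show ?thesis using assms unfolding Zs_def mem_Collect_eq n c
    by (simp add: sigma_def mult.commute add.commute)
qed

lemma qb_sigma:
  assumes "p \<in> Zs lam" "lam > 0"
  shows "qb (sigma p) = (\<not> qb p)"
  using Zs_neq[OF assms] by (auto simp: qb_def sigma_def)

lemma csm_case_option: "csm U A \<Longrightarrow> (\<And>j. csm U (B j)) \<Longrightarrow> csm U (\<lambda>x. case k of None \<Rightarrow> A x | Some j \<Rightarrow> B j x)"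
  by (cases k) auto

lemma sm_coord: "sm U (\<lambda>x::real^'m. x $ i)"
  by (rule sm_lin) (rule bounded_linear_vec_nth)

lemma csm_zs: "csm U (\<lambda>x. zs x j)"
  unfolding zs_def by (intro csm_Complex sm_coord)
lemma csm_ws: "csm U (\<lambda>x. ws x j)"
  unfolding ws_def by (intro csm_Complex sm_coord)

lemma nA_pre: "nA (pre x) = (\<Sum>j\<in>UNIV. (cmod (zs x j))\<^sup>2)" by (simp add: nA_def pre_def)
lemma nB_pre: "nB (pre x) = (\<Sum>j\<in>UNIV. (cmod (ws x j))\<^sup>2)" by (simp add: nB_def pre_def)
lemma cc_pre: "cc (pre x) = (\<Sum>j\<in>UNIV. zs x j * cnj (ws x j))" by (simp add: cc_def pre_def)

lemma sm_RR: "sm U (RR lam)"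
  unfolding RR_def[abs_def] nA_pre nB_pre
  by (intro sm_add sm_const sm_sum sm_cmod2 csm_zs csm_ws) auto

lemma csm_ccpre: "csm U (\<lambda>x. cc (pre x))"
  unfolding cc_pre by (intro csm_sum csm_mult csm_cnj csm_zs csm_ws) auto

lemma sm_rr:
  assumes "lam > 0"
  shows "sm U (rr lam :: real^('n::finite \<times> 4) \<Rightarrow> real)"
proof -
  have D: "sm U (\<lambda>x. (RR lam x)\<^sup>2 - 4 * (cmod (cc (pre x)))\<^sup>2)"
    by (intro sm_diff sm_pow2 sm_RR sm_cmult sm_cmod2 csm_ccpre)
  have Dp: "\<forall>x\<in>U. (RR lam x)\<^sup>2 - 4 * (cmod (cc (pre x)))\<^sup>2 > 0"
  proof
    fix x :: "real^('n \<times> 4)"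
    show "(RR lam x)\<^sup>2 - 4 * (cmod (cc (pre x)))\<^sup>2 > 0" using disc_pos[OF assms, of "pre x"] by (simp add: RR_def)
  qed
  have "sm U (rho lam)" unfolding rho_def[abs_def]
    by (rule sm_divide[OF sm_add[OF sm_RR sm_sqrt[OF D Dp]] sm_const]) simp
  then show ?thesis unfolding rr_def[abs_def] by (rule sm_sqrt) (use rho_props(1)[OF assms] in auto)
qed

lemma sec_smooth:
  assumes "lam > 0"
  shows "smooth_on UNIV (sec lam b)"
proof -
  have r: "sm UNIV (rr lam)" by (rule sm_rr[OF assms])
  have rp: "\<forall>x\<in>UNIV. rr lam x > 0" using rr_props(1)[OF assms] by auto
  show ?thesis
    apply (rule smooth_sm_components[OF open_UNIV])
    apply (rule cpt_components)
    unfolding sec_def fst_conv snd_conv vec_lambda_beta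
     apply (intro csm_case_option csm_zs csm_ws)
     apply (cases b)
      apply (simp add: csm_of_real[OF r])
     apply (simp add: csm_div_real[OF csm_ccpre r rp])
    apply (intro csm_case_option csm_zs csm_ws)
    apply (cases b)
     apply (simp add: csm_div_real[OF csm_cnj[OF csm_ccpre] r rp])
    apply (simp add: csm_of_real[OF r])
    done
qed

definition Ub :: "bool \<Rightarrow> 'n::finite option cpt set" where
  "Ub b = (if b then {x. cmod (snd x $ None) < cmod (fst x $ None)} else {x. cmod (fst x $ None) < cmod (snd x $ None)})"

lemma cont_fst_None: "continuous_on UNIV (\<lambda>x::'n::finite option cpt. cmod (fst x $ None))"
  by (intro continuous_intros)
lemma cont_snd_None: "continuous_on UNIV (\<lambda>x::'n::finite option cpt. cmod (snd x $ None))"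
  by (intro continuous_intros)

lemma open_Ub: "open (Ub b)"
  unfolding Ub_def by (cases b) (simp_all add: open_Collect_less cont_fst_None cont_snd_None)

lemma Ub_mem: "p \<in> Zs lam \<Longrightarrow> lam > 0 \<Longrightarrow> p \<in> Ub (qb p)"
  using Zs_neq[of p lam] by (auto simp: Ub_def qb_def)

lemma qb_Ub: "x \<in> Ub b \<Longrightarrow> qb x = b"
  by (cases b) (auto simp: Ub_def qb_def)

lemma sm_cmod_pos:
  assumes "csm U f" "\<forall>x\<in>U. f x \<noteq> 0"
  shows "sm U (\<lambda>x. cmod (f x))"
proof -
  have "sm U (\<lambda>x. sqrt ((cmod (f x))\<^sup>2))" by (rule sm_sqrt[OF sm_cmod2[OF assms(1)]]) (use assms(2) in auto)
  then show ?thesis by (rule sm_cong) simp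
qed

lemma qx_smooth: "smooth_on (Ub b) (qx :: 'n::finite option cpt \<Rightarrow> _)"
proof -
  define c where "c = (\<lambda>x::'n option cpt. if b then fst x $ None else snd x $ None)"
  have cc: "csm (Ub b) c" unfolding c_def by (cases b) (simp_all add: csm_fst_coord csm_snd_coord)
  have cnz: "\<forall>x\<in>Ub b. c x \<noteq> 0" unfolding c_def Ub_def by (cases b) auto
  have u: "\<forall>x\<in>Ub b. uu x = c x / of_real (cmod (c x))" unfolding c_def using qb_Ub by (auto simp: uu_def)
  have cu: "csm (Ub b) (\<lambda>x. c x / of_real (cmod (c x)))"
    by (rule csm_div_real[OF cc sm_cmod_pos[OF cc cnz]]) (use cnz in auto)
  have G: "csm (Ub b) (\<lambda>x. c x / of_real (cmod (c x)) * fst x $ Some j)" for j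
    by (intro csm_mult cu csm_fst_coord)
  have H: "csm (Ub b) (\<lambda>x. c x / of_real (cmod (c x)) * snd x $ Some j)" for j
    by (intro csm_mult cu csm_snd_coord)
  have "sm (Ub b :: 'n option cpt set) (\<lambda>x. qx x $ i)" for i
  proof -
    obtain j m where i: "i = (j, m)" by (cases i)
    let ?G = "\<lambda>x. c x / of_real (cmod (c x)) * fst x $ Some j" and ?H = "\<lambda>x. c x / of_real (cmod (c x)) * snd x $ Some j"
    have "sm (Ub b) (\<lambda>x. if m = 1 then Re (?G x) else if m = 2 then Im (?G x) else if m = 3 then Re (?H x) else Im (?H x))"
      using sm_Re[OF G] sm_Im[OF G] sm_Re[OF H] sm_Im[OF H]
      by (cases "m = 1"; cases "m = 2"; cases "m = 3") simp_all
    then show ?thesis unfolding i by (rule sm_cong) (use u in \<open>simp add: qx_def\<close>)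
  qed
  then show ?thesis by (intro smooth_sm_components open_Ub vec_components)
qed

definition chart_data :: "'a::euclidean_space set \<Rightarrow> 'a set \<Rightarrow> 'a set \<Rightarrow> ('a \<Rightarrow> 'a) \<Rightarrow> ('a \<Rightarrow> 'a) \<Rightarrow> 'a set \<Rightarrow> 'a \<Rightarrow> bool" where
  "chart_data Z U V \<phi> \<psi> L p \<longleftrightarrow> open U \<and> open V \<and> p \<in> U \<and> (\<forall>x\<in>U. \<phi> x \<in> V \<and> \<psi> (\<phi> x) = x)
     \<and> (\<forall>y\<in>V. \<psi> y \<in> U \<and> \<phi> (\<psi> y) = y) \<and> (\<forall>b\<in>Basis. sm U (\<lambda>x. \<phi> x \<bullet> b)) \<and> (\<forall>b\<in>Basis. sm V (\<lambda>y. \<psi> y \<bullet> b))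
     \<and> subspace L \<and> (\<forall>x\<in>U. \<phi> x \<in> L \<longleftrightarrow> x \<in> Z)"

lemma chart_image: "chart_data Z U V \<phi> \<psi> L p \<Longrightarrow> \<phi> ` U = V"
  unfolding chart_data_def by (auto intro: rev_image_eqI)

lemma chart_emb:
  assumes "chart_data Z U V \<phi> \<psi> L p" "dim L = k"
  shows "\<exists>U (\<phi>::'a::euclidean_space \<Rightarrow> 'a) \<psi> L.
      open U \<and> p \<in> U \<and> open (\<phi> ` U) \<and> smooth_on U \<phi> \<and> smooth_on (\<phi> ` U) \<psi>
      \<and> (\<forall>x\<in>U. \<psi> (\<phi> x) = x) \<and> subspace L \<and> dim L = k \<and> \<phi> ` (Z \<inter> U) = \<phi> ` U \<inter> L"
proof (intro exI conjI)
  have im: "\<phi> ` U = V" by (rule chart_image[OF assms(1)])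
  show "open U" "p \<in> U" "open (\<phi> ` U)" "\<forall>x\<in>U. \<psi> (\<phi> x) = x" "subspace L" "dim L = k"
    using assms im unfolding chart_data_def by auto
  show "smooth_on U \<phi>" using assms(1) unfolding chart_data_def by (intro smooth_sm_components) auto
  show "smooth_on (\<phi> ` U) \<psi>" using assms(1) unfolding im chart_data_def by (intro smooth_sm_components) auto
  show "\<phi> ` (Z \<inter> U) = \<phi> ` U \<inter> L" using assms(1) unfolding chart_data_def by auto
qed

lemma inner_opS: "opS y \<bullet> b = y \<bullet> opS b"
  by (simp add: opS_def inner_prod_def add.commute)

lemma opS_Basis: "b \<in> Basis \<Longrightarrow> opS b \<in> (Basis :: ('n::finite cpt) set)"
  by (auto simp: opS_def Basis_prod_def)

lemma bl_opS: "bounded_linear (opS :: 'n::finite cpt \<Rightarrow> _)"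
  using linear_opS linear_conv_bounded_linear by blast

lemma opS_cont: "continuous_on UNIV (opS :: 'n::finite cpt \<Rightarrow> _)"
  using bl_opS linear_continuous_on by blast

lemma chart_opS:
  assumes "chart_data Z U V \<phi> \<psi> L (opS p)" "\<forall>z. z \<in> Z \<longleftrightarrow> opS z \<in> Z"
  shows "chart_data Z (opS -` U) V (\<lambda>x. \<phi> (opS x)) (\<lambda>y. opS (\<psi> y)) L (p :: 'n::finite cpt)"
proof -
  have o: "open U" using assms(1) unfolding chart_data_def by auto
  have "\<And>x. isCont opS x" using opS_cont continuous_on_eq_continuous_at open_UNIV UNIV_I by metis
  then have "open (opS -` U)" using continuous_open_vimage[OF o] by blast
  moreover have "\<forall>b\<in>Basis. sm (opS -` U) (\<lambda>x. \<phi> (opS x) \<bullet> b)"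
  proof
    fix b :: "'n cpt" assume "b \<in> Basis"
    then have "sm U (\<lambda>x. \<phi> x \<bullet> b)" using assms(1) unfolding chart_data_def by auto
    then show "sm (opS -` U) (\<lambda>x. \<phi> (opS x) \<bullet> b)" using sm_precomp[OF _ bl_opS] by blast
  qed
  moreover have "\<forall>b\<in>Basis. sm V (\<lambda>y. opS (\<psi> y) \<bullet> b)"
    using assms(1) opS_Basis unfolding chart_data_def inner_opS by blast
  ultimately show ?thesis using assms unfolding chart_data_def by (auto simp: opS_opS)
qed

definition Lset :: "('n::finite) option cpt set" where
  "Lset = {y. Re (fst y $ None) = 0 \<and> snd y $ None = 0}"

lemma card_option_UNIV: "CARD('n::finite option) = CARD('n) + 1"
proof -
  have U: "(UNIV::'n option set) = insert None (range Some)" by (auto intro: option.exhaust)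
  have "card (range (Some :: 'n \<Rightarrow> _)) = CARD('n)" by (rule card_image) (auto simp: inj_on_def)
  then show ?thesis unfolding U by (subst card_insert_disjoint) auto
qed

lemma Lset_substandard:
  "Lset = {y::('n::finite) option cpt. \<forall>i\<in>Basis. i \<notin> Basis - {(axis None 1, 0), (0, axis None 1), (0, axis None \<i>)} \<longrightarrow> y \<bullet> i = 0}"
proof -
  let ?R = "{(axis None 1, 0), (0, axis None 1), (0, axis None \<i>)} :: ('n option cpt) set"
  have sub: "?R \<subseteq> Basis" by (auto simp: Basis_prod_def Basis_vec_def Basis_complex_def)
  have "(\<forall>i\<in>Basis. i \<notin> Basis - ?R \<longrightarrow> y \<bullet> i = 0) \<longleftrightarrow> (\<forall>i\<in>?R. y \<bullet> i = 0)" for y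
    using sub by blast
  moreover have "(\<forall>i\<in>?R. y \<bullet> i = 0) \<longleftrightarrow> Re (fst y $ None) = 0 \<and> snd y $ None = 0" for y
    by (auto simp: inner_prod_def inner_axis inner_complex_def complex_eq_iff)
  ultimately show ?thesis unfolding Lset_def by auto
qed

lemma Lset_subspace: "subspace Lset"
  unfolding Lset_substandard by (rule subspace_substandard)

lemma Lset_dim: "dim (Lset :: ('n::finite) option cpt set) = 4 * CARD('n) + 1"
proof -
  let ?R = "{(axis None 1, 0), (0, axis None 1), (0, axis None \<i>)} :: ('n option cpt) set"
  have sub: "?R \<subseteq> Basis" by (auto simp: Basis_prod_def Basis_vec_def Basis_complex_def)
  have c3: "card ?R = 3" by (auto simp: axis_eq_axis prod_eq_iff complex_eq_iff)
  have "card (Basis - ?R) = card (Basis :: 'n option cpt set) - 3"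
    using card_Diff_subset[OF _ sub] c3 by (simp add: finite_subset[OF sub])
  moreover have "card (Basis :: 'n option cpt set) = 4 * CARD('n) + 4"
    using card_option_UNIV[where 'n='n] by simp
  ultimately have "card (Basis - ?R) = 4 * CARD('n) + 1" by simp
  then show ?thesis unfolding Lset_substandard by (subst dim_substandard) auto
qed

definition phi :: "real \<Rightarrow> complex \<Rightarrow> ('n::finite) option cpt \<Rightarrow> 'n option cpt" where
  "phi lam u x = ((\<chi> k. case k of None \<Rightarrow> Complex (gH (opI (Jg x)) x + 2 * lam) (Im (fst x $ None * cnj u)) | Some j \<Rightarrow> fst x $ Some j),
                  (\<chi> k. case k of None \<Rightarrow> Complex (gH (opS (Jg x)) x) (gH (opT (Jg x)) x) | Some j \<Rightarrow> snd x $ Some j))"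

definition pR :: "real \<Rightarrow> ('n::finite) option cpt \<Rightarrow> real" where
  "pR lam y = 2 * lam + nz y - Re (fst y $ None)"
definition pc :: "('n::finite) option cpt \<Rightarrow> complex" where
  "pc y = cc y + Complex (- Im (snd y $ None) / 2) (Re (snd y $ None) / 2)"
definition pD :: "real \<Rightarrow> ('n::finite) option cpt \<Rightarrow> real" where
  "pD lam y = (pR lam y)\<^sup>2 - 4 * (cmod (pc y))\<^sup>2"
definition prho :: "real \<Rightarrow> ('n::finite) option cpt \<Rightarrow> real" where
  "prho lam y = (pR lam y + sqrt (pD lam y)) / 2"
definition pt :: "real \<Rightarrow> ('n::finite) option cpt \<Rightarrow> real" where
  "pt lam y = sqrt (prho lam y - (Im (fst y $ None))\<^sup>2)"
definition pz0 :: "real \<Rightarrow> complex \<Rightarrow> ('n::finite) option cpt \<Rightarrow> complex" where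
  "pz0 lam u y = u * Complex (pt lam y) (Im (fst y $ None))"
definition pw0 :: "real \<Rightarrow> complex \<Rightarrow> ('n::finite) option cpt \<Rightarrow> complex" where
  "pw0 lam u y = cnj (pc y) * pz0 lam u y / of_real (prho lam y)"
definition psi :: "real \<Rightarrow> complex \<Rightarrow> ('n::finite) option cpt \<Rightarrow> 'n option cpt" where
  "psi lam u y = ((\<chi> k. case k of None \<Rightarrow> pz0 lam u y | Some j \<Rightarrow> fst y $ Some j),
                  (\<chi> k. case k of None \<Rightarrow> pw0 lam u y | Some j \<Rightarrow> snd y $ Some j))"

definition Uc :: "complex \<Rightarrow> ('n::finite) option cpt set" where
  "Uc u = {x. cmod (snd x $ None) < cmod (fst x $ None) \<and> Re (fst x $ None * cnj u) > 0}"
definition Vc :: "real \<Rightarrow> ('n::finite) option cpt set" where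
  "Vc lam = {y. pD lam y > 0 \<and> prho lam y - (Im (fst y $ None))\<^sup>2 > 0}"

lemma nz_phi: "nz (phi lam u x) = nz x" by (simp add: nz_def phi_def)
lemma cc_phi: "cc (phi lam u x) = cc x" by (simp add: cc_def phi_def)
lemma nz_psi: "nz (psi lam u y) = nz y" by (simp add: nz_def psi_def)
lemma cc_psi: "cc (psi lam u y) = cc y" by (simp add: cc_def psi_def)

lemma rot_back: "cmod u = 1 \<Longrightarrow> u * (z * cnj u) = z"
  using unit_cnj[of u] by (simp add: algebra_simps)

lemma chart_left:
  assumes x: "x \<in> Uc u" and u: "cmod u = 1"
  shows "phi lam u x \<in> Vc lam \<and> psi lam u (phi lam u x) = x"
proof -
  let ?z = "fst x $ None" and ?w = "snd x $ None" and ?y = "phi lam u x"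
  let ?P = "(cmod ?z)\<^sup>2" and ?Q = "(cmod ?w)\<^sup>2"
  have PQ: "?P > ?Q" using x unfolding Uc_def by (simp add: power_strict_mono)
  have re: "Re (?z * cnj u) > 0" using x unfolding Uc_def by simp
  have R: "pR lam ?y = ?P + ?Q" unfolding pR_def nz_phi by (simp add: phi_def QI_eq)
  have c: "pc ?y = ?z * cnj ?w" unfolding pc_def cc_phi by (simp add: phi_def QS_eq QT_eq complex_eq_iff field_simps)
  have D: "pD lam ?y = (?P + ?Q)\<^sup>2 - 4 * (?P * ?Q)" unfolding pD_def R c by (simp add: norm_mult power_mult_distrib)
  have rho: "prho lam ?y = ?P" unfolding prho_def R D by (rule root_id[OF PQ]) simp
  have s: "Im (fst ?y $ None) = Im (?z * cnj u)" by (simp add: phi_def)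
  have nzu: "(Re (?z * cnj u))\<^sup>2 + (Im (?z * cnj u))\<^sup>2 = ?P"
  proof -
    have "(Re (?z * cnj u))\<^sup>2 + (Im (?z * cnj u))\<^sup>2 = (cmod (?z * cnj u))\<^sup>2" by (simp only: cmod_power2)
    also have "\<dots> = ?P" using u by (simp add: norm_mult)
    finally show ?thesis .
  qed
  have ts: "prho lam ?y - (Im (fst ?y $ None))\<^sup>2 = (Re (?z * cnj u))\<^sup>2" unfolding rho s using nzu by simp
  have t: "pt lam ?y = Re (?z * cnj u)" unfolding pt_def ts using re by simp
  have z0: "pz0 lam u ?y = ?z" unfolding pz0_def t s complex_surj rot_back[OF u] ..
  have znz: "?z \<noteq> 0" using PQ by auto
  have w0: "pw0 lam u ?y = ?w"
  proof -
    have "pw0 lam u ?y = (?z * cnj ?z) * ?w / of_real ?P" unfolding pw0_def z0 c rho by (simp add: algebra_simps)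
    also have "\<dots> = ?w" using znz by (simp add: complex_norm_square[symmetric])
    finally show ?thesis .
  qed
  have inV: "?y \<in> Vc lam" unfolding Vc_def mem_Collect_eq D ts
  proof
    have "(?P + ?Q)\<^sup>2 - 4 * (?P * ?Q) = (?P - ?Q)\<^sup>2" by (simp add: power2_eq_square algebra_simps)
    moreover have "(?P - ?Q)\<^sup>2 > 0" using PQ by (intro zero_less_power2[THEN iffD2]) linarith
    ultimately show "0 < (?P + ?Q)\<^sup>2 - 4 * (?P * ?Q)" by simp
    show "0 < (Re (?z * cnj u))\<^sup>2" using re by simp
  qed
  have "psi lam u ?y = x" unfolding psi_def z0 w0
    by (simp add: phi_def prod_eq_iff vec_eq_iff split: option.splits)
  then show ?thesis using inV by simp
qed

lemma pR_pos:
  assumes "pD lam y > 0" "prho lam y > 0"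
  shows "pR lam y > 0"
proof (rule ccontr)
  assume "\<not> pR lam y > 0"
  then have R: "pR lam y \<le> 0" by simp
  have "pD lam y \<le> (pR lam y)\<^sup>2" unfolding pD_def by simp
  then have "sqrt (pD lam y) \<le> sqrt ((pR lam y)\<^sup>2)" by (rule real_sqrt_le_mono)
  then have "sqrt (pD lam y) \<le> - pR lam y" using R by simp
  then have "prho lam y \<le> 0" unfolding prho_def by simp
  then show False using assms by simp
qed

lemma psi_fst_None: "fst (psi lam u y) $ None = pz0 lam u y" by (simp add: psi_def)
lemma psi_snd_None: "snd (psi lam u y) $ None = pw0 lam u y" by (simp add: psi_def)

lemma chart_right:
  assumes y: "y \<in> Vc lam" and u: "cmod u = 1"
  shows "psi lam u y \<in> Uc u \<and> phi lam u (psi lam u y) = y"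
proof -
  let ?s = "Im (fst y $ None)" and ?\<rho> = "prho lam y" and ?c = "pc y" and ?t = "pt lam y"
  let ?z = "pz0 lam u y" and ?w = "pw0 lam u y" and ?x = "psi lam u y"
  have D: "pD lam y > 0" and rs: "?\<rho> - ?s\<^sup>2 > 0" using y unfolding Vc_def by auto
  have rpos: "?\<rho> > 0" using rs by (smt (verit) zero_le_power2)
  have R: "pR lam y > 0" by (rule pR_pos[OF D rpos])
  have F: "?\<rho>\<^sup>2 + (cmod ?c)\<^sup>2 = pR lam y * ?\<rho>" "(cmod ?c)\<^sup>2 < ?\<rho>\<^sup>2"
    using rho_facts[of "(cmod ?c)\<^sup>2" "pR lam y"] R D unfolding prho_def pD_def by auto
  have t: "?t > 0" "?t\<^sup>2 = ?\<rho> - ?s\<^sup>2" unfolding pt_def using rs by auto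
  have zn: "(cmod ?z)\<^sup>2 = ?\<rho>" unfolding pz0_def using u t by (simp add: norm_mult cmod_power2)
  have wn: "(cmod ?w)\<^sup>2 = (cmod ?c)\<^sup>2 / ?\<rho>"
  proof -
    have "cmod ?w = cmod ?c * cmod ?z / ?\<rho>" unfolding pw0_def using rpos by (simp add: norm_mult norm_divide)
    then have "(cmod ?w)\<^sup>2 = (cmod ?c)\<^sup>2 * (cmod ?z)\<^sup>2 / ?\<rho>\<^sup>2" by (simp add: power_mult_distrib power_divide)
    also have "\<dots> = (cmod ?c)\<^sup>2 / ?\<rho>" unfolding zn using rpos by (simp add: power2_eq_square)
    finally show ?thesis .
  qed
  have lt: "(cmod ?w)\<^sup>2 < (cmod ?z)\<^sup>2" unfolding wn zn using F(2) rpos by (simp add: field_simps power2_eq_square)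
  have zu: "?z * cnj u = Complex ?t ?s" unfolding pz0_def using unit_cnj'[OF u] by (simp add: algebra_simps)
  have inU: "?x \<in> Uc u" unfolding Uc_def mem_Collect_eq
  proof
    show "cmod (snd ?x $ None) < cmod (fst ?x $ None)" using lt by (simp add: psi_def power2_less_imp_less)
    show "0 < Re (fst ?x $ None * cnj u)" using zu t by (simp add: psi_def)
  qed
  have sumPQ: "(cmod ?z)\<^sup>2 + (cmod ?w)\<^sup>2 = pR lam y" unfolding wn zn using F(1) rpos by (simp add: field_simps power2_eq_square)
  have zw: "?z * cnj ?w = ?c"
  proof -
    have "?z * cnj ?w = ?c * (?z * cnj ?z) / of_real ?\<rho>" unfolding pw0_def by (simp add: algebra_simps)
    also have "?z * cnj ?z = of_real ?\<rho>" using zn complex_norm_square[of ?z] by simp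
    finally show ?thesis using rpos by simp
  qed
  have c1: "Re (fst (phi lam u ?x) $ None) = Re (fst y $ None)"
    using sumPQ by (simp add: phi_def QI_eq nz_psi pR_def psi_fst_None psi_snd_None)
  have c2: "Im (fst (phi lam u ?x) $ None) = ?s"
    using zu by (simp add: phi_def psi_fst_None)
  have c3: "snd (phi lam u ?x) $ None = snd y $ None"
    using zw by (simp add: phi_def QS_eq QT_eq cc_psi psi_fst_None psi_snd_None pc_def complex_eq_iff)
  have "phi lam u ?x = y"
    using c1 c2 c3 by (auto simp: phi_def psi_def prod_eq_iff vec_eq_iff complex_eq_iff split: option.splits)
  then show ?thesis using inU by simp
qed

lemma phi_L:
  "phi lam u x \<in> Lset \<longleftrightarrow> x \<in> Zs lam"
  unfolding Lset_def Zs_Q by (auto simp: phi_def complex_eq_iff)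

lemma sm_nz: "sm U (nz :: 'n::finite option cpt \<Rightarrow> real)"
  unfolding nz_def[abs_def] by (intro sm_sum sm_add sm_cmod2 csm_fst_coord csm_snd_coord) auto
lemma csm_cc: "csm U (cc :: 'n::finite option cpt \<Rightarrow> complex)"
  unfolding cc_def[abs_def] by (intro csm_sum csm_mult csm_cnj csm_fst_coord csm_snd_coord) auto

lemma sm_QI: "sm U (\<lambda>x::'n::finite option cpt. gH (opI (Jg x)) x)"
  unfolding QI_eq by (intro sm_diff sm_add sm_nz sm_cmod2 csm_fst_coord csm_snd_coord)
lemma sm_QS: "sm U (\<lambda>x::'n::finite option cpt. gH (opS (Jg x)) x)"
  unfolding QS_eq by (intro sm_cmult sm_Im csm_diff csm_mult csm_cnj csm_cc csm_fst_coord csm_snd_coord)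
lemma sm_QT: "sm U (\<lambda>x::'n::finite option cpt. gH (opT (Jg x)) x)"
  unfolding QT_eq by (intro sm_cmult sm_Re csm_diff csm_mult csm_cnj csm_cc csm_fst_coord csm_snd_coord)

lemma phi_sm: "\<forall>b\<in>Basis. sm U (\<lambda>x. phi lam u (x :: 'n::finite option cpt) \<bullet> b)"
  apply (rule cpt_components)
  unfolding phi_def fst_conv snd_conv vec_lambda_beta
   apply (intro csm_case_option csm_Complex csm_fst_coord sm_add sm_QI sm_const sm_Im csm_mult csm_const)
  apply (intro csm_case_option csm_Complex csm_snd_coord sm_QS sm_QT)
  done

lemma sm_pR: "sm U (pR lam :: 'n::finite option cpt \<Rightarrow> real)"
  unfolding pR_def[abs_def] by (intro sm_diff sm_add sm_const sm_nz sm_Re csm_fst_coord)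
lemma csm_pc: "csm U (pc :: 'n::finite option cpt \<Rightarrow> complex)"
  unfolding pc_def[abs_def] by (intro csm_add csm_cc csm_Complex sm_divide sm_minus sm_Im sm_Re csm_snd_coord sm_const) auto
lemma sm_pD: "sm U (pD lam :: 'n::finite option cpt \<Rightarrow> real)"
  unfolding pD_def[abs_def] by (intro sm_diff sm_pow2 sm_pR sm_cmult sm_cmod2 csm_pc)

lemma Vc_pos:
  assumes "y \<in> Vc lam" shows "pD lam y > 0" "prho lam y > 0" "prho lam y - (Im (fst y $ None))\<^sup>2 > 0"
proof -
  show "pD lam y > 0" "prho lam y - (Im (fst y $ None))\<^sup>2 > 0" using assms unfolding Vc_def by auto
  then show "prho lam y > 0" by (smt (verit) zero_le_power2)
qed

lemma sm_prho: "sm (Vc lam) (prho lam :: 'n::finite option cpt \<Rightarrow> real)"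
  unfolding prho_def[abs_def]
  by (intro sm_divide sm_add sm_pR sm_sqrt sm_pD sm_const) (auto dest: Vc_pos)

lemma psi_sm: "\<forall>b\<in>Basis. sm (Vc lam) (\<lambda>y. psi lam u (y :: 'n::finite option cpt) \<bullet> b)"
proof -
  have t: "sm (Vc lam) (pt lam :: 'n::finite option cpt \<Rightarrow> real)"
    unfolding pt_def[abs_def] by (intro sm_sqrt sm_diff sm_prho sm_pow2 sm_Im csm_fst_coord) (auto dest: Vc_pos)
  have z: "csm (Vc lam) (pz0 lam u :: 'n::finite option cpt \<Rightarrow> complex)"
    unfolding pz0_def[abs_def] by (intro csm_mult csm_const csm_Complex t sm_Im csm_fst_coord)
  have w: "csm (Vc lam) (pw0 lam u :: 'n::finite option cpt \<Rightarrow> complex)"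
    unfolding pw0_def[abs_def] by (intro csm_div_real csm_mult csm_cnj csm_pc z sm_prho) (auto dest: Vc_pos)
  show ?thesis
    apply (rule cpt_components)
    unfolding psi_def fst_conv snd_conv vec_lambda_beta
     apply (intro csm_case_option z csm_fst_coord)
    apply (intro csm_case_option w csm_snd_coord)
    done
qed

lemma open_Uc: "open (Uc u :: 'n::finite option cpt set)"
proof -
  have "Uc u = {x::'n option cpt. cmod (snd x $ None) < cmod (fst x $ None)} \<inter> {x. 0 < Re (fst x $ None * cnj u)}"
    unfolding Uc_def by auto
  moreover have "open {x::'n option cpt. 0 < Re (fst x $ None * cnj u)}"
    by (rule open_Collect_less) (intro continuous_intros)+
  ultimately show ?thesis using open_Collect_less[OF cont_snd_None cont_fst_None] by auto
qed

lemma sm_cont: "sm UNIV f \<Longrightarrow> continuous_on UNIV f"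
  using sm_differentiable[OF open_UNIV]
  by (meson UNIV_I differentiable_imp_continuous_within continuous_at_imp_continuous_on)

lemma open_Vc: "open (Vc lam :: 'n::finite option cpt set)"
proof -
  have c1: "continuous_on UNIV (pD lam :: 'n option cpt \<Rightarrow> real)" by (rule sm_cont[OF sm_pD])
  have c2: "continuous_on UNIV (pR lam :: 'n option cpt \<Rightarrow> real)" by (rule sm_cont[OF sm_pR])
  have c3: "continuous_on UNIV (\<lambda>y::'n option cpt. Im (fst y $ None))" by (rule sm_cont[OF sm_Im[OF csm_fst_coord]])
  have c4: "continuous_on UNIV (\<lambda>y::'n option cpt. prho lam y - (Im (fst y $ None))\<^sup>2)"
    unfolding prho_def by (intro continuous_intros c1 c2 c3) auto
  have o1: "open {y::'n option cpt. 0 < pD lam y}" by (rule open_Collect_less[OF continuous_on_const c1])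
  have o2: "open {y::'n option cpt. 0 < prho lam y - (Im (fst y $ None))\<^sup>2}" by (rule open_Collect_less[OF continuous_on_const c4])
  have "Vc lam = {y::'n option cpt. 0 < pD lam y} \<inter> {y. 0 < prho lam y - (Im (fst y $ None))\<^sup>2}"
    unfolding Vc_def by blast
  then show ?thesis using open_Int[OF o1 o2] by simp
qed

lemma chart_concrete:
  assumes "p \<in> Uc u" "cmod u = 1"
  shows "chart_data (Zs lam) (Uc u) (Vc lam) (phi lam u) (psi lam u) Lset (p :: 'n::finite option cpt)"
  unfolding chart_data_def
  using assms open_Uc open_Vc chart_left chart_right phi_sm psi_sm Lset_subspace phi_L by blast

lemma Zs_opS: "z \<in> Zs lam \<longleftrightarrow> opS z \<in> Zs lam"
proof -
  have n: "nz (opS z) = nz z" unfolding nz_def opS_def by (simp add: add.commute)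
  have c: "cc (opS z) = cnj (cc z)" unfolding cc_def opS_def by (simp add: mult.commute)
  have e: "snd z $ None * cnj (fst z $ None) = cnj (cc z) \<longleftrightarrow> fst z $ None * cnj (snd z $ None) = cc z"
  proof
    assume "snd z $ None * cnj (fst z $ None) = cnj (cc z)"
    then have "cnj (snd z $ None * cnj (fst z $ None)) = cc z" by simp
    then show "fst z $ None * cnj (snd z $ None) = cc z" by (simp add: mult.commute)
  next
    assume "fst z $ None * cnj (snd z $ None) = cc z"
    then have "cnj (fst z $ None * cnj (snd z $ None)) = cnj (cc z)" by simp
    then show "snd z $ None * cnj (fst z $ None) = cnj (cc z)" by (simp add: mult.commute)
  qed
  have "opS z \<in> Zs lam \<longleftrightarrow> (cmod (snd z $ None))\<^sup>2 + (cmod (fst z $ None))\<^sup>2 = 2 * lam + nz z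
     \<and> snd z $ None * cnj (fst z $ None) = cnj (cc z)"
    unfolding Zs_def mem_Collect_eq n c by (simp add: opS_def)
  then show ?thesis unfolding e by (simp add: Zs_def add.commute)
qed

definition Qf :: "('n::finite option cpt \<Rightarrow> 'n option cpt) \<Rightarrow> 'n option cpt \<Rightarrow> real" where
  "Qf A x = gH (A (Jg x)) x"

definition Rset :: "'n::finite option cpt set" where
  "Rset = {(axis None 1, 0), (0, axis None 1), (0, axis None \<i>)}"

definition chart_Q :: "'n::finite option cpt set \<Rightarrow> ('n option cpt \<Rightarrow> 'n option cpt) \<Rightarrow> bool" where
  "chart_Q U \<phi> \<longleftrightarrow> (\<forall>b\<in>Rset. \<exists>A\<in>{opI, opS, opT}. \<exists>\<kappa> d. \<forall>x\<in>U. \<phi> x \<bullet> b = \<kappa> * Qf A x + d)"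

lemma Lset_R: "Lset = {y. \<forall>b\<in>Rset. y \<bullet> b = 0}"
  unfolding Lset_def Rset_def by (auto simp: inner_prod_def inner_axis inner_complex_def complex_eq_iff)

lemma chartQ_concrete: "chart_Q U (phi lam u :: 'n::finite option cpt \<Rightarrow> _)"
  unfolding chart_Q_def Rset_def
proof (intro ballI)
  fix b :: "'n option cpt" assume "b \<in> {(axis None 1, 0), (0, axis None 1), (0, axis None \<i>)}"
  then consider "b = (axis None 1, 0)" | "b = (0, axis None 1)" | "b = (0, axis None \<i>)" by blast
  then show "\<exists>A\<in>{opI, opS, opT}. \<exists>\<kappa> d. \<forall>x\<in>U. phi lam u x \<bullet> b = \<kappa> * Qf A x + d"
  proof cases
    case 1
    have "\<forall>x\<in>U. phi lam u x \<bullet> b = 1 * Qf opI x + 2 * lam"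
      unfolding 1 by (simp add: phi_def Qf_def inner_prod_def inner_axis inner_complex_def)
    then show ?thesis by blast
  next
    case 2
    have "\<forall>x\<in>U. phi lam u x \<bullet> b = 1 * Qf opS x + 0"
      unfolding 2 by (simp add: phi_def Qf_def inner_prod_def inner_axis inner_complex_def)
    then show ?thesis by blast
  next
    case 3
    have "\<forall>x\<in>U. phi lam u x \<bullet> b = 1 * Qf opT x + 0"
      unfolding 3 by (simp add: phi_def Qf_def inner_prod_def inner_axis inner_complex_def)
    then show ?thesis by blast
  qed
qed

lemma Qf_opS: "(A :: 'n::finite option cpt \<Rightarrow> _) \<in> {opI, opS, opT} \<Longrightarrow> \<exists>\<sigma>. \<forall>x. Qf A (opS x) = \<sigma> * Qf A x"
proof -
  have n: "nz (opS z) = nz z" for z :: "'n option cpt" unfolding nz_def opS_def by (simp add: add.commute)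
  have c: "cc (opS z) = cnj (cc z)" for z :: "'n option cpt" unfolding cc_def opS_def by (simp add: mult.commute)
  have I: "Qf opI (opS x) = 1 * Qf opI x" for x :: "'n option cpt"
    unfolding Qf_def QI_eq n by (simp add: opS_def)
  have S: "Qf opS (opS x) = (-1) * Qf opS x" for x :: "'n option cpt"
    unfolding Qf_def QS_eq c by (simp add: opS_def)
  have T: "Qf opT (opS x) = 1 * Qf opT x" for x :: "'n option cpt"
    unfolding Qf_def QT_eq c by (simp add: opS_def)
  assume "A \<in> {opI, opS, opT}"
  then show ?thesis using I S T by blast
qed

lemma chartQ_opS: "chart_Q U (\<phi> :: 'n::finite option cpt \<Rightarrow> _) \<Longrightarrow> chart_Q (opS -` U) (\<lambda>x. \<phi> (opS x))"
  unfolding chart_Q_def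
proof (intro ballI)
  fix b :: "'n option cpt"
  assume "\<forall>b\<in>Rset. \<exists>A\<in>{opI, opS, opT}. \<exists>\<kappa> d. \<forall>x\<in>U. \<phi> x \<bullet> b = \<kappa> * Qf A x + d" "b \<in> Rset"
  then obtain A \<kappa> d where A: "A \<in> {opI, opS, opT}" "\<forall>x\<in>U. \<phi> x \<bullet> b = \<kappa> * Qf A x + d" by blast
  obtain \<sigma> where s: "\<forall>x. Qf A (opS x) = \<sigma> * Qf A x" using Qf_opS[OF A(1)] by blast
  have "\<forall>x\<in>opS -` U. \<phi> (opS x) \<bullet> b = (\<kappa> * \<sigma>) * Qf A x + d"
  proof
    fix x assume "x \<in> opS -` U"
    then have "opS x \<in> U" by simp
    then show "\<phi> (opS x) \<bullet> b = (\<kappa> * \<sigma>) * Qf A x + d" using A(2) s[rule_format, of x] by simp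
  qed
  then show "\<exists>A\<in>{opI, opS, opT}. \<exists>\<kappa> d. \<forall>x\<in>opS -` U. \<phi> (opS x) \<bullet> b = \<kappa> * Qf A x + d" using A(1) by blast
qed

lemma chart_at:
  assumes "p \<in> Zs lam" "lam > 0"
  shows "\<exists>U V \<phi> \<psi>. chart_data (Zs lam) U V \<phi> \<psi> Lset (p :: 'n::finite option cpt) \<and> chart_Q U \<phi>"
proof (cases "qb p")
  case True
  let ?z = "fst p $ None"
  let ?u = "?z / of_real (cmod ?z)"
  have zn: "?z \<noteq> 0" using True unfolding qb_def by auto
  have u: "cmod ?u = 1" using zn by (simp add: norm_divide)
  have "Re (?z * cnj ?u) = cmod ?z"
  proof -
    have "?z * cnj ?u = (?z * cnj ?z) / of_real (cmod ?z)" by simp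
    also have "?z * cnj ?z = of_real ((cmod ?z)\<^sup>2)" by (rule complex_norm_square[symmetric])
    finally show ?thesis using zn by (simp add: power2_eq_square)
  qed
  then have "p \<in> Uc ?u" using True zn unfolding Uc_def qb_def by simp
  then show ?thesis using chart_concrete[OF _ u] chartQ_concrete by blast
next
  case False
  let ?p = "opS p"
  let ?z = "fst ?p $ None"
  let ?u = "?z / of_real (cmod ?z)"
  have ne: "cmod (fst p $ None) \<noteq> cmod (snd p $ None)" by (rule Zs_neq[OF assms])
  then have lt: "cmod (snd ?p $ None) < cmod (fst ?p $ None)" using False unfolding qb_def by (simp add: opS_def)
  then have zn: "?z \<noteq> 0" by auto
  have u: "cmod ?u = 1" using zn by (simp add: norm_divide)
  have "Re (?z * cnj ?u) = cmod ?z"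
  proof -
    have "?z * cnj ?u = (?z * cnj ?z) / of_real (cmod ?z)" by simp
    also have "?z * cnj ?z = of_real ((cmod ?z)\<^sup>2)" by (rule complex_norm_square[symmetric])
    finally show ?thesis using zn by (simp add: power2_eq_square)
  qed
  then have "?p \<in> Uc ?u" using lt zn unfolding Uc_def by simp
  then have "chart_data (Zs lam) (Uc ?u) (Vc lam) (phi lam ?u) (psi lam ?u) Lset (opS p)"
    by (rule chart_concrete[OF _ u])
  then have "chart_data (Zs lam) (opS -` Uc ?u) (Vc lam) (\<lambda>x. phi lam ?u (opS x)) (\<lambda>y. opS (psi lam ?u y)) Lset p"
    by (rule chart_opS) (use Zs_opS in blast)
  then show ?thesis using chartQ_opS[OF chartQ_concrete] by blast
qed

lemma Zs_embedded:
  assumes "lam > 0"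
  shows "embedded_submanifold (4 * CARD('n) + 1) (Zs lam :: 'n::finite option cpt set)"
  unfolding embedded_submanifold_def
proof
  fix p :: "'n option cpt" assume "p \<in> Zs lam"
  then obtain U V \<phi> \<psi> where "chart_data (Zs lam) U V \<phi> \<psi> Lset p" using chart_at[OF _ assms] by meson
  then show "\<exists>U (\<phi>::'n option cpt \<Rightarrow> 'n option cpt) \<psi> L.
      open U \<and> p \<in> U \<and> open (\<phi> ` U) \<and> smooth_on U \<phi> \<and> smooth_on (\<phi> ` U) \<psi>
      \<and> (\<forall>x\<in>U. \<psi> (\<phi> x) = x) \<and> subspace L \<and> dim L = 4 * CARD('n) + 1 \<and> \<phi> ` (Zs lam \<inter> U) = \<phi> ` U \<inter> L"
    by (rule chart_emb[OF _ Lset_dim])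
qed

definition Tp :: "'n::finite option cpt \<Rightarrow> 'n option cpt set" where
  "Tp p = {Y. gH (opI (Jg p)) Y = 0 \<and> gH (opS (Jg p)) Y = 0 \<and> gH (opT (Jg p)) Y = 0}"

lemma linA: "A \<in> {opI, opS, opT} \<Longrightarrow> linear A"
  using linear_opI linear_opS linear_opT by auto

lemma Qsym: "A \<in> {opI, opS, opT} \<Longrightarrow> gH (A (Jg x)) y = gH (A (Jg y)) x"
  apply (elim insertE emptyE) using QI_sym[of x y] QS_sym[of x y] QT_sym[of x y] by simp_all

lemma bb_Q:
  assumes "A \<in> {opI, opS, opT}"
  shows "bounded_bilinear (\<lambda>a b. gH (A (Jg a)) (b :: 'n::finite option cpt))"
proof -
  have lA: "linear A" by (rule linA[OF assms])
  have "bilinear (\<lambda>a b. gH (A (Jg a)) (b :: 'n::finite option cpt))"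
    unfolding bilinear_def
  proof (intro conjI allI)
    fix x :: "'n option cpt"
    show "linear (\<lambda>y. gH (A (Jg x)) y)" by (rule linearI) (simp_all add: gH_add_right gH_scale_right)
  next
    fix y :: "'n option cpt"
    show "linear (\<lambda>x. gH (A (Jg x)) y)"
      by (rule linearI) (simp_all add: Jg_add Jg_scale linear_add[OF lA] linear_scale[OF lA] gH_add_left gH_scale_left)
  qed
  then show ?thesis by (simp add: bilinear_conv_bounded_bilinear)
qed


lemma Q_deriv_at:
  assumes A: "A \<in> {opI, opS, opT}" and f: "(f has_derivative f') (at x within s)"
  shows "((\<lambda>t. Qf A (f t)) has_derivative (\<lambda>h. 2 * gH (A (Jg (f x))) (f' h))) (at x within s)"
proof -
  have "((\<lambda>t. gH (A (Jg (f t))) (f t)) has_derivative (\<lambda>h. gH (A (Jg (f x))) (f' h) + gH (A (Jg (f' h))) (f x))) (at x within s)"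
    by (rule bounded_bilinear.FDERIV[OF bb_Q[OF A] f f])
  moreover have "(\<lambda>h. gH (A (Jg (f x))) (f' h) + gH (A (Jg (f' h))) (f x)) = (\<lambda>h. 2 * gH (A (Jg (f x))) (f' h))"
    using Qsym[OF A] by (auto simp: fun_eq_iff)
  ultimately show ?thesis unfolding Qf_def by simp
qed

lemma Zs_Qf: "p \<in> Zs lam \<longleftrightarrow> Qf opI p = - 2 * lam \<and> Qf opS p = 0 \<and> Qf opT p = 0"
  unfolding Qf_def by (rule Zs_Q)

lemma tangent_sub:
  assumes "Y \<in> tangent_space (Zs lam) p"
  shows "Y \<in> Tp p"
proof -
  obtain \<gamma> where g: "\<gamma> 0 = p" "\<forall>t. \<gamma> t \<in> Zs lam" "(\<gamma> has_vector_derivative Y) (at 0)"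
    using assms unfolding tangent_space_def by blast
  have gd: "(\<gamma> has_derivative (\<lambda>t. t *\<^sub>R Y)) (at 0)" using g(3) unfolding has_vector_derivative_def .
  have Z: "gH (A (Jg p)) Y = 0" if A: "A \<in> {opI, opS, opT}" for A
  proof -
    have d1: "((\<lambda>t. Qf A (\<gamma> t)) has_derivative (\<lambda>h. 2 * gH (A (Jg p)) (h *\<^sub>R Y))) (at 0)"
      using Q_deriv_at[OF A gd] g(1) by simp
    have "\<exists>c. \<forall>t. Qf A (\<gamma> t) = c"
      using A g(2) Zs_Qf by blast
    then obtain c where "\<forall>t. Qf A (\<gamma> t) = c" by blast
    then have "(\<lambda>t. Qf A (\<gamma> t)) = (\<lambda>t. c)" by auto
    then have d2: "((\<lambda>t. Qf A (\<gamma> t)) has_derivative (\<lambda>h. 0)) (at 0)" by simp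
    have "(\<lambda>h. 2 * gH (A (Jg p)) (h *\<^sub>R Y)) = (\<lambda>h::real. 0)" by (rule has_derivative_unique[OF d1 d2])
    then have "2 * gH (A (Jg p)) (1 *\<^sub>R Y) = 0" by (metis (mono_tags))
    then show ?thesis by simp
  qed
  show ?thesis unfolding Tp_def using Z by auto
qed

lemma fd_comp_inner:
  assumes "(f has_derivative D) (at p)"
  shows "((\<lambda>x. f x \<bullet> b) has_derivative (\<lambda>h. D h \<bullet> b)) (at p)"
  using assms by (intro derivative_eq_intros) auto

lemma tangent_sup:
  assumes p: "p \<in> Zs lam" and lam: "lam > 0" and Y: "Y \<in> Tp p"
  shows "Y \<in> tangent_space (Zs lam) (p :: 'n::finite option cpt)"
proof -
  obtain U V \<phi> \<psi> where cd: "chart_data (Zs lam) U V \<phi> \<psi> Lset p" and cq: "chart_Q U \<phi>"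
    using chart_at[OF p lam] by blast
  have U: "open U" and V: "open V" and pU: "p \<in> U" and inv1: "\<forall>x\<in>U. \<phi> x \<in> V \<and> \<psi> (\<phi> x) = x"
    and inv2: "\<forall>y\<in>V. \<psi> y \<in> U \<and> \<phi> (\<psi> y) = y" and smp: "\<forall>b\<in>Basis. sm U (\<lambda>x. \<phi> x \<bullet> b)"
    and sms: "\<forall>b\<in>Basis. sm V (\<lambda>y. \<psi> y \<bullet> b)" and LZ: "\<forall>x\<in>U. \<phi> x \<in> Lset \<longleftrightarrow> x \<in> Zs lam"
    using cd unfolding chart_data_def by auto
  have sL: "subspace Lset" by (rule Lset_subspace)
  have pV: "\<phi> p \<in> V" using inv1 pU by auto
  have "\<phi> differentiable (at p)" by (rule smooth_differentiable[OF smooth_sm_components[OF U smp] pU])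
  then obtain D\<phi> where D\<phi>: "(\<phi> has_derivative D\<phi>) (at p)" unfolding differentiable_def by blast
  have "\<psi> differentiable (at (\<phi> p))" by (rule smooth_differentiable[OF smooth_sm_components[OF V sms] pV])
  then obtain D\<psi> where D\<psi>: "(\<psi> has_derivative D\<psi>) (at (\<phi> p))" unfolding differentiable_def by blast
  have lin\<psi>: "linear D\<psi>" using D\<psi> has_derivative_linear by blast
  have c1: "((\<lambda>x. \<psi> (\<phi> x)) has_derivative (\<lambda>h. D\<psi> (D\<phi> h))) (at p)"
    using diff_chain_at[OF D\<phi> D\<psi>] by (simp add: o_def)
  have c2: "((\<lambda>x. \<psi> (\<phi> x)) has_derivative (\<lambda>h. h)) (at p)"
    by (rule has_derivative_transform_within_open[OF has_derivative_ident U pU]) (use inv1 in auto)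
  have inv: "D\<psi> (D\<phi> h) = h" for h using has_derivative_unique[OF c1 c2] by metis
  define v where "v = D\<phi> Y"
  have vL: "v \<in> Lset" unfolding Lset_R mem_Collect_eq
  proof
    fix b :: "'n option cpt" assume b: "b \<in> Rset"
    then obtain A \<kappa> d where A: "A \<in> {opI, opS, opT}" "\<forall>x\<in>U. \<phi> x \<bullet> b = \<kappa> * Qf A x + d"
      using cq unfolding chart_Q_def by blast
    have d1: "((\<lambda>x. \<phi> x \<bullet> b) has_derivative (\<lambda>h. D\<phi> h \<bullet> b)) (at p)" by (rule fd_comp_inner[OF D\<phi>])
    have "((\<lambda>x. Qf A x) has_derivative (\<lambda>h. 2 * gH (A (Jg p)) h)) (at p)"
      using Q_deriv_at[OF A(1) has_derivative_ident] by simp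
    then have "((\<lambda>x. \<kappa> * Qf A x + d) has_derivative (\<lambda>h. \<kappa> * (2 * gH (A (Jg p)) h))) (at p)"
      by (intro derivative_eq_intros) auto
    then have d2: "((\<lambda>x. \<phi> x \<bullet> b) has_derivative (\<lambda>h. \<kappa> * (2 * gH (A (Jg p)) h))) (at p)"
      by (rule has_derivative_transform_within_open[OF _ U pU]) (use A(2) in auto)
    have "(\<lambda>h. D\<phi> h \<bullet> b) = (\<lambda>h. \<kappa> * (2 * gH (A (Jg p)) h))" by (rule has_derivative_unique[OF d1 d2])
    then have "v \<bullet> b = \<kappa> * (2 * gH (A (Jg p)) Y)" unfolding v_def by metis
    moreover have "gH (A (Jg p)) Y = 0" using A(1) Y unfolding Tp_def by auto
    ultimately show "v \<bullet> b = 0" by simp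
  qed
  have pL: "\<phi> p \<in> Lset" using LZ pU p by auto
  define h where "h = (\<lambda>t::real. \<phi> p + t *\<^sub>R v)"
  define \<gamma> where "\<gamma> = (\<lambda>t. if h t \<in> V then \<psi> (h t) else p)"
  have hL: "h t \<in> Lset" for t unfolding h_def by (rule real_vector.subspace_add[OF sL pL real_vector.subspace_scale[OF sL vL]])
  have h0: "h 0 = \<phi> p" unfolding h_def by simp
  have g0: "\<gamma> 0 = p" unfolding \<gamma>_def h0 using pV inv1 pU by auto
  have gZ: "\<gamma> t \<in> Zs lam" for t
  proof (cases "h t \<in> V")
    case True
    then have "\<psi> (h t) \<in> U" "\<phi> (\<psi> (h t)) = h t" using inv2 by auto
    then have "\<psi> (h t) \<in> Zs lam" using LZ hL by metis
    then show ?thesis unfolding \<gamma>_def using True by simp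
  next
    case False then show ?thesis unfolding \<gamma>_def using p by simp
  qed
  have hd: "(h has_derivative (\<lambda>t. t *\<^sub>R v)) (at 0)" unfolding h_def by (intro derivative_eq_intros) auto
  have D\<psi>': "(\<psi> has_derivative D\<psi>) (at (h 0))" using D\<psi> h0 by simp
  have "((\<lambda>t. \<psi> (h t)) has_derivative (\<lambda>t. D\<psi> (t *\<^sub>R v))) (at 0)"
    using diff_chain_at[OF hd D\<psi>'] by (simp add: o_def)
  moreover have "(\<lambda>t. D\<psi> (t *\<^sub>R v)) = (\<lambda>t. t *\<^sub>R Y)"
    using inv linear_scale[OF lin\<psi>] unfolding v_def by auto
  ultimately have d: "((\<lambda>t. \<psi> (h t)) has_derivative (\<lambda>t. t *\<^sub>R Y)) (at 0)" by simp
  have ch: "continuous_on UNIV h" unfolding h_def by (intro continuous_intros)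
  have oS: "open (h -` V)" using continuous_open_vimage[OF V] ch
    by (metis continuous_on_eq_continuous_at open_UNIV UNIV_I)
  have "(\<gamma> has_derivative (\<lambda>t. t *\<^sub>R Y)) (at 0)"
    by (rule has_derivative_transform_within_open[OF d oS]) (use h0 pV in \<open>auto simp: \<gamma>_def\<close>)
  then have "(\<gamma> has_vector_derivative Y) (at 0)" unfolding has_vector_derivative_def .
  then show ?thesis unfolding tangent_space_def using g0 gZ by blast
qed

lemma tangent_eq:
  assumes "p \<in> Zs lam" "lam > 0"
  shows "tangent_space (Zs lam) (p :: 'n::finite option cpt) = Tp p"
  using tangent_sub tangent_sup[OF assms] by blast

lemma bl_torus: "bounded_linear (torus_act t :: 'n::finite cpt \<Rightarrow> _)"
  using torus_linear linear_conv_bounded_linear by blast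

lemma eventually_in_open:
  fixes \<gamma> :: "real \<Rightarrow> 'a::metric_space"
  assumes "isCont \<gamma> 0" "open U" "\<gamma> 0 \<in> U"
  shows "\<exists>d>0. \<forall>t::real. dist t 0 < d \<longrightarrow> \<gamma> t \<in> U"
proof -
  obtain e where e: "e > 0" "ball (\<gamma> 0) e \<subseteq> U" using openE[OF assms(2,3)] by blast
  obtain d where d: "d > 0" "\<forall>t. dist t 0 < d \<longrightarrow> dist (\<gamma> t) (\<gamma> 0) < e"
    using assms(1) e(1) unfolding continuous_at_eps_delta by blast
  have "\<forall>t::real. dist t 0 < d \<longrightarrow> \<gamma> t \<in> U"
  proof (intro allI impI)
    fix t :: real assume "dist t 0 < d"
    then have "dist (\<gamma> t) (\<gamma> 0) < e" using d(2) by blast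
    then have "dist (\<gamma> 0) (\<gamma> t) < e" by (simp add: dist_commute)
    then show "\<gamma> t \<in> U" using e(2) by auto
  qed
  then show ?thesis using d(1) by blast
qed

lemma deriv_surj:
  assumes p: "p \<in> Zs lam" and lam: "lam > 0" and U: "open U" "p \<in> U" and g: "smooth_on U g"
    and eq: "\<forall>x\<in>U \<inter> Zs lam. g x = qx x"
  shows "frechet_derivative g (at p) ` tangent_space (Zs lam) (p :: 'n::finite option cpt) = UNIV"
proof -
  have "g differentiable (at p)" by (rule smooth_differentiable[OF g U(2)])
  then obtain Dg where Dg: "(g has_derivative Dg) (at p)" unfolding differentiable_def by blast
  have fDg: "frechet_derivative g (at p) = Dg" using frechet_derivative_at[OF Dg] by simp
  let ?b = "qb p" and ?x0 = "qx p" and ?u = "uu p"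
  have u1: "cmod ?u = 1" by (rule uu_unit[OF p lam])
  have rec: "p = torus_act (tN ?u) (sec lam ?b ?x0)" by (rule recon[OF p lam])
  show ?thesis
  proof (intro set_eqI iffI)
    fix y :: "real^('n \<times> 4)"
    have "sec lam ?b differentiable (at ?x0)" by (rule smooth_differentiable[OF sec_smooth[OF lam]]) simp
    then obtain Ds where Ds: "(sec lam ?b has_derivative Ds) (at ?x0)" unfolding differentiable_def by blast
    define h where "h = (\<lambda>t::real. ?x0 + t *\<^sub>R y)"
    define \<gamma> where "\<gamma> = (\<lambda>t. torus_act (tN ?u) (sec lam ?b (h t)))"
    define Y where "Y = torus_act (tN ?u) (Ds y)"
    have hd: "(h has_derivative (\<lambda>t. t *\<^sub>R y)) (at 0)" unfolding h_def by (intro derivative_eq_intros) auto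
    have Ds': "(sec lam ?b has_derivative Ds) (at (h 0))" using Ds by (simp add: h_def)
    have "((\<lambda>t. sec lam ?b (h t)) has_derivative (\<lambda>t. Ds (t *\<^sub>R y))) (at 0)"
      using diff_chain_at[OF hd Ds'] by (simp add: o_def)
    then have "(\<gamma> has_derivative (\<lambda>t. torus_act (tN ?u) (Ds (t *\<^sub>R y)))) (at 0)"
      unfolding \<gamma>_def by (rule bounded_linear.has_derivative[OF bl_torus])
    moreover have "(\<lambda>t. torus_act (tN ?u) (Ds (t *\<^sub>R y))) = (\<lambda>t. t *\<^sub>R Y)"
    proof -
      have "linear Ds" using Ds has_derivative_linear by blast
      then show ?thesis unfolding Y_def by (simp add: linear_scale[OF torus_linear] linear_scale)
    qed
    ultimately have gd: "(\<gamma> has_derivative (\<lambda>t. t *\<^sub>R Y)) (at 0)" by simp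
    have g0: "\<gamma> 0 = p" unfolding \<gamma>_def h_def using rec by simp
    have gZ: "\<gamma> t \<in> Zs lam" for t unfolding \<gamma>_def by (rule act_Zs[OF u1 sec_Zs[OF lam]])
    have YT: "Y \<in> tangent_space (Zs lam) p"
      unfolding tangent_space_def has_vector_derivative_def using g0 gZ gd by blast
    have qg: "qx (\<gamma> t) = ?x0 + t *\<^sub>R y" for t unfolding \<gamma>_def qx_act[OF u1] qx_sec[OF lam] h_def ..
    have ic: "isCont \<gamma> 0" using gd has_derivative_continuous by blast
    have "\<exists>d>0. \<forall>t. dist t 0 < d \<longrightarrow> \<gamma> t \<in> U"
      by (rule eventually_in_open[OF ic U(1)]) (simp add: g0 U(2))
    then obtain d where d: "d > 0" "\<forall>t. dist t 0 < d \<longrightarrow> \<gamma> t \<in> U" by blast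
    have c1: "((\<lambda>t. g (\<gamma> t)) has_derivative (\<lambda>t. Dg (t *\<^sub>R Y))) (at 0)"
      using diff_chain_at[OF gd] Dg g0 by (simp add: o_def)
    have c2: "((\<lambda>t. g (\<gamma> t)) has_derivative (\<lambda>t. t *\<^sub>R y)) (at 0)"
    proof (rule has_derivative_transform_within[OF _ d(1)])
      show "((\<lambda>t. ?x0 + t *\<^sub>R y) has_derivative (\<lambda>t. t *\<^sub>R y)) (at 0 within UNIV)"
        by (intro derivative_eq_intros) auto
      show "0 \<in> (UNIV::real set)" by simp
      fix t :: real assume "t \<in> UNIV" "dist t 0 < d"
      then have "\<gamma> t \<in> U" using d(2) by blast
      then show "?x0 + t *\<^sub>R y = g (\<gamma> t)" using eq gZ qg by simp
    qed
    have "(\<lambda>t. Dg (t *\<^sub>R Y)) = (\<lambda>t. t *\<^sub>R y)" by (rule has_derivative_unique[OF c1 c2])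
    then have "Dg (1 *\<^sub>R Y) = 1 *\<^sub>R y" by (rule fun_cong)
    then have "Dg Y = y" by simp
    then show "y \<in> frechet_derivative g (at p) ` tangent_space (Zs lam) p" unfolding fDg using YT by blast
  qed simp
qed

lemma act_decomp: "torus_act (tN s) p = Re s *\<^sub>R p + Im s *\<^sub>R Jg p"
  unfolding torus_act_def tN_def Jg_def
  by (auto simp: vec_eq_iff prod_eq_iff complex_eq_iff sg_def split: option.splits)

lemma inner_pJ: "p \<bullet> Jg p = 0"
  unfolding Jg_def by (simp add: inner_prod_def inner_vec_def inner_complex_def sg_def algebra_simps)

lemma abs_sg: "\<bar>sg k\<bar> = 1" by (cases k) (simp_all add: sg_def)

lemma inner_JJ: "Jg p \<bullet> Jg p = p \<bullet> p"
proof -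
  have a: "cmod (\<i> * of_real (sg k)) = 1" for k by (cases k) (simp_all add: sg_def norm_mult)
  have e: "(\<i> * of_real (sg k) * z) \<bullet> (\<i> * of_real (sg k) * z) = z \<bullet> z" for k and z :: complex
  proof -
    have "(\<i> * of_real (sg k) * z) \<bullet> (\<i> * of_real (sg k) * z) = (norm (\<i> * of_real (sg k) * z))\<^sup>2"
      by (simp only: power2_norm_eq_inner)
    also have "\<dots> = (norm z)\<^sup>2" by (simp add: norm_mult abs_sg)
    finally show ?thesis by (simp only: power2_norm_eq_inner)
  qed
  show ?thesis unfolding Jg_def inner_prod_def inner_vec_def by (simp only: fst_conv snd_conv vec_lambda_beta e)
qed

lemma act_norm:
  assumes "cmod s = 1"
  shows "torus_act (tN s) p \<bullet> torus_act (tN s) p = p \<bullet> p"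
proof -
  have "(Re s)\<^sup>2 + (Im s)\<^sup>2 = 1" using assms by (simp add: cmod_power2[symmetric])
  moreover have "torus_act (tN s) p \<bullet> torus_act (tN s) p = ((Re s)\<^sup>2 + (Im s)\<^sup>2) * (p \<bullet> p)"
    unfolding act_decomp using inner_pJ[of p] inner_JJ[of p]
    by (simp add: inner_add_left inner_add_right inner_commute power2_eq_square algebra_simps)
  ultimately show ?thesis by simp
qed

lemma orbit_tangent:
  assumes p0: "p \<noteq> 0"
  shows "tangent_space (orbit (kerN (u_ex :: 'n::finite option \<Rightarrow> 'n \<Rightarrow> int)) p) p = range (\<lambda>a. a *\<^sub>R Jg p)"
proof (intro set_eqI iffI)
  fix Y assume "Y \<in> range (\<lambda>a. a *\<^sub>R Jg p)"
  then obtain a where Y: "Y = a *\<^sub>R Jg p" by blast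
  define \<gamma> where "\<gamma> = (\<lambda>t. cos (a * t) *\<^sub>R p + sin (a * t) *\<^sub>R Jg p)"
  have "\<gamma> t = torus_act (tN (cis (a * t))) p" for t unfolding \<gamma>_def act_decomp by simp
  then have gO: "\<gamma> t \<in> orbit (kerN u_ex) p" for t unfolding orbit_eq by auto
  have g0: "\<gamma> 0 = p" unfolding \<gamma>_def by simp
  have dl: "((\<lambda>t. a * t) has_real_derivative a * 1) (at 0)" by (rule DERIV_cmult[OF DERIV_ident])
  have d1: "((\<lambda>t. cos (a * t)) has_real_derivative (- sin (a * 0) * (a * 1))) (at 0)"
    by (rule DERIV_chain2[OF DERIV_cos dl])
  have d2: "((\<lambda>t. sin (a * t)) has_real_derivative (cos (a * 0) * (a * 1))) (at 0)"
    by (rule DERIV_chain2[OF DERIV_sin dl])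
  have "(\<gamma> has_vector_derivative ((cos (a * 0) *\<^sub>R 0 + (- sin (a * 0) * (a * 1)) *\<^sub>R p) + (sin (a * 0) *\<^sub>R 0 + (cos (a * 0) * (a * 1)) *\<^sub>R Jg p))) (at 0)"
    unfolding \<gamma>_def
    by (intro has_vector_derivative_add has_vector_derivative_scaleR d1 d2 has_vector_derivative_const)
  then have "(\<gamma> has_vector_derivative Y) (at 0)" unfolding Y by simp
  then show "Y \<in> tangent_space (orbit (kerN u_ex) p) p" unfolding tangent_space_def using gO g0 by blast
next
  fix Y assume "Y \<in> tangent_space (orbit (kerN (u_ex :: 'n::finite option \<Rightarrow> 'n \<Rightarrow> int)) p) p"
  then obtain \<gamma> where g: "\<gamma> 0 = p" "\<forall>t. \<gamma> t \<in> orbit (kerN u_ex) p" "(\<gamma> has_vector_derivative Y) (at 0)"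
    unfolding tangent_space_def by blast
  have gd: "(\<gamma> has_derivative (\<lambda>t. t *\<^sub>R Y)) (at 0)" using g(3) unfolding has_vector_derivative_def .
  let ?n = "p \<bullet> p"
  have npos: "?n > 0" using p0 by simp
  define P where "P = (\<lambda>x. x - (((x \<bullet> p) / ?n) *\<^sub>R p + ((x \<bullet> Jg p) / ?n) *\<^sub>R Jg p))"
  have Pz: "P (\<gamma> t) = 0" for t
  proof -
    obtain s where s: "cmod s = 1" "\<gamma> t = torus_act (tN s) p" using g(2) unfolding orbit_eq by blast
    have pj: "Jg p \<bullet> p = 0" using inner_pJ[of p] by (simp add: inner_commute)
    have "\<gamma> t \<bullet> p = Re s * ?n" "\<gamma> t \<bullet> Jg p = Im s * ?n"
      unfolding s act_decomp using inner_pJ[of p] inner_JJ[of p] pj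
      by (simp_all add: inner_add_left inner_scaleR_left)
    then show ?thesis unfolding P_def using npos by (simp add: s act_decomp)
  qed
  have b1: "bounded_linear (\<lambda>x. (x \<bullet> p / ?n) *\<^sub>R p)"
    by (rule bounded_linear_compose[OF bounded_linear_scaleR_left bounded_linear_compose[OF bounded_linear_divide bounded_linear_inner_left]])
  have b2: "bounded_linear (\<lambda>x. (x \<bullet> Jg p / ?n) *\<^sub>R Jg p)"
    by (rule bounded_linear_compose[OF bounded_linear_scaleR_left bounded_linear_compose[OF bounded_linear_divide bounded_linear_inner_left]])
  have blP: "bounded_linear P" unfolding P_def
    by (intro bounded_linear_sub bounded_linear_add bounded_linear_ident b1 b2)
  have "((\<lambda>t. P (\<gamma> t)) has_derivative (\<lambda>t. P (t *\<^sub>R Y))) (at 0)"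
    by (rule bounded_linear.has_derivative[OF blP gd])
  moreover have "((\<lambda>t. P (\<gamma> t)) has_derivative (\<lambda>t. 0)) (at 0)" using Pz by simp
  ultimately have "(\<lambda>t. P (t *\<^sub>R Y)) = (\<lambda>t. 0)" by (rule has_derivative_unique)
  then have "P (1 *\<^sub>R Y) = 0" by (rule fun_cong)
  then have PY: "P Y = 0" by simp
  have "((\<lambda>t. \<gamma> t \<bullet> \<gamma> t) has_derivative (\<lambda>h. \<gamma> 0 \<bullet> (h *\<^sub>R Y) + (h *\<^sub>R Y) \<bullet> \<gamma> 0)) (at 0)"
    by (rule has_derivative_inner[OF gd gd])
  moreover have "(\<lambda>t. \<gamma> t \<bullet> \<gamma> t) = (\<lambda>t. ?n)"
  proof
    fix t
    obtain s where s: "cmod s = 1" "\<gamma> t = torus_act (tN s) p" using g(2) unfolding orbit_eq by blast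
    show "\<gamma> t \<bullet> \<gamma> t = ?n" unfolding s(2) by (rule act_norm[OF s(1)])
  qed
  ultimately have "((\<lambda>t. ?n) has_derivative (\<lambda>h. \<gamma> 0 \<bullet> (h *\<^sub>R Y) + (h *\<^sub>R Y) \<bullet> \<gamma> 0)) (at 0)" by simp
  moreover have "((\<lambda>t::real. ?n) has_derivative (\<lambda>h. 0)) (at 0)" by simp
  ultimately have "(\<lambda>h. \<gamma> 0 \<bullet> (h *\<^sub>R Y) + (h *\<^sub>R Y) \<bullet> \<gamma> 0) = (\<lambda>h::real. 0)" by (rule has_derivative_unique)
  then have "\<gamma> 0 \<bullet> (1 *\<^sub>R Y) + (1 *\<^sub>R Y) \<bullet> \<gamma> 0 = 0" by (rule fun_cong)
  then have "p \<bullet> Y + Y \<bullet> p = 0" using g(1) by simp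
  then have pY: "Y \<bullet> p = 0" by (simp add: inner_commute)
  have "Y = ((Y \<bullet> Jg p) / ?n) *\<^sub>R Jg p" using PY pY unfolding P_def by simp
  then show "Y \<in> range (\<lambda>a. a *\<^sub>R Jg p)" by blast
qed

context
  fixes X :: "'d::finite cpt"
begin

lemma G_IX_X: "gH (opI X) X = 0" by (rule gH_opI_self)
lemma G_SX_X: "gH (opS X) X = 0" by (rule gH_opS_self)
lemma G_TX_X: "gH (opI (opS X)) X = 0" using gH_opT_self[of X] by (simp add: opT_def)
lemma G_X_IX: "gH X (opI X) = 0" using G_IX_X gH_sym by metis
lemma G_X_SX: "gH X (opS X) = 0" using G_SX_X gH_sym by metis
lemma G_X_TX: "gH X (opI (opS X)) = 0" using G_TX_X gH_sym by metis
lemma G_IX_SX: "gH (opI X) (opS X) = 0"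
  using gH_opI_anti[of X "opS X"] G_X_TX by simp
lemma G_IX_TX: "gH (opI X) (opI (opS X)) = 0"
  using gH_opI[of X "opS X"] G_X_SX by simp
lemma G_SX_TX: "gH (opS X) (opI (opS X)) = 0"
  using gH_opS_anti[of X "opI (opS X)"] G_X_IX by (simp add: opS_opI opS_opS gH_minus_right)
lemma G_SX_IX: "gH (opS X) (opI X) = 0" using G_IX_SX gH_sym by metis
lemma G_TX_IX: "gH (opI (opS X)) (opI X) = 0" using G_IX_TX gH_sym by metis
lemma G_TX_SX: "gH (opI (opS X)) (opS X) = 0" using G_SX_TX gH_sym by metis
lemma G_II: "gH (opI X) (opI X) = gH X X" by (rule gH_opI)
lemma G_SS: "gH (opS X) (opS X) = - gH X X" by (rule gH_opS)
lemma G_TT: "gH (opI (opS X)) (opI (opS X)) = - gH X X" by (simp add: gH_opI gH_opS)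

lemmas Gram = G_IX_X G_SX_X G_TX_X G_X_IX G_X_SX G_X_TX G_IX_SX G_IX_TX G_SX_TX G_SX_IX G_TX_IX G_TX_SX G_II G_SS G_TT

definition TT :: "'d cpt set" where
  "TT = {Y. gH (opI X) Y = 0 \<and> gH (opS X) Y = 0 \<and> gH (opI (opS X)) Y = 0}"

lemmas lin_simps = opI_add opI_scale opI_minus opI_opI opS_add opS_scale opS_minus opS_opS opS_opI
  gH_add_left gH_add_right gH_scale_left gH_scale_right gH_minus_left gH_minus_right gH_diff_left gH_diff_right

lemma opI_diff: "opI (a - b) = opI a - opI b" using opI_add[of a "-b"] opI_minus by simp
lemma opS_diff: "opS (a - b) = opS a - opS b" using opS_add[of a "-b"] opS_minus by simp

lemma four_form:
  assumes q: "gH X X \<noteq> 0" and Y: "Y = a *\<^sub>R X + b *\<^sub>R opI X + c *\<^sub>R opS X + d *\<^sub>R opI (opS X)" and T: "Y \<in> TT"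
  shows "Y = a *\<^sub>R X"
proof -
  have "gH (opI X) Y = b * gH X X" unfolding Y by (simp add: lin_simps Gram)
  then have b: "b = 0" using T q unfolding TT_def by simp
  have "gH (opS X) Y = - c * gH X X" unfolding Y by (simp add: lin_simps Gram)
  then have c: "c = 0" using T q unfolding TT_def by simp
  have "gH (opI (opS X)) Y = - d * gH X X" unfolding Y by (simp add: lin_simps Gram)
  then have d: "d = 0" using T q unfolding TT_def by simp
  show ?thesis using Y b c d by simp
qed

definition proj :: "'d cpt \<Rightarrow> 'd cpt" where
  "proj e = e - (gH (opI X) e / gH X X) *\<^sub>R opI X + (gH (opS X) e / gH X X) *\<^sub>R opS X
             + (gH (opI (opS X)) e / gH X X) *\<^sub>R opI (opS X)"

lemma proj_T: assumes q: "gH X X \<noteq> 0" shows "proj e \<in> TT"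
  unfolding TT_def proj_def using q by (simp add: lin_simps Gram)

end

context
  fixes X :: "'d::finite cpt"
begin

lemma AY_eq:
  fixes A :: "'d cpt \<Rightarrow> 'd cpt"
  assumes q: "gH X X \<noteq> 0" and lA: "linear A" and anti: "\<And>a b. gH a (A b) = - gH (A a) b"
    and H: "\<forall>Y'\<in>TT X. gH Y (A Y') = 0"
  shows "A Y = (- gH Y (A (opI X)) / gH X X) *\<^sub>R opI X + (gH Y (A (opS X)) / gH X X) *\<^sub>R opS X
              + (gH Y (A (opI (opS X))) / gH X X) *\<^sub>R opI (opS X)" (is "A Y = ?W")
proof -
  let ?q = "gH X X"
  have "gH (A Y - ?W) e = 0" for e
  proof -
    have "gH Y (A (proj X e)) = 0" using H proj_T[OF q] by blast
    moreover have "gH Y (A (proj X e)) = gH Y (A e) - (gH (opI X) e / ?q) * gH Y (A (opI X))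
        + (gH (opS X) e / ?q) * gH Y (A (opS X)) + (gH (opI (opS X)) e / ?q) * gH Y (A (opI (opS X)))"
      unfolding proj_def by (simp add: linear_add[OF lA] linear_diff[OF lA] linear_scale[OF lA] gH_add_right gH_diff_right gH_scale_right)
    moreover have "gH Y (A e) = - gH (A Y) e" by (rule anti)
    moreover have "gH (A Y - ?W) e = gH (A Y) e - ((- gH Y (A (opI X)) / ?q) * gH (opI X) e + (gH Y (A (opS X)) / ?q) * gH (opS X) e
              + (gH Y (A (opI (opS X))) / ?q) * gH (opI (opS X)) e)"
      by (simp add: gH_add_left gH_diff_left gH_scale_left)
    ultimately show ?thesis by (simp add: field_simps)
  qed
  then have "A Y - ?W = 0" using gH_nondeg by blast
  then show ?thesis by simp
qed

lemma nondeg_core: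
  assumes q: "gH X X \<noteq> 0" and A: "A \<in> {opI, opS, opT}"
  shows "{Y \<in> TT X. \<forall>Y'\<in>TT X. gH Y (A Y') = 0} = range (\<lambda>a. a *\<^sub>R X)"
proof (intro set_eqI iffI)
  fix Y assume "Y \<in> range (\<lambda>a. a *\<^sub>R X)"
  then obtain a where Y: "Y = a *\<^sub>R X" by blast
  have XT: "X \<in> TT X" unfolding TT_def by (simp add: Gram)
  have "Y \<in> TT X" unfolding Y TT_def using XT unfolding TT_def by (simp add: gH_scale_right)
  moreover have "\<forall>Y'\<in>TT X. gH Y (A Y') = 0"
  proof
    fix Y' assume Y': "Y' \<in> TT X"
    have "gH X (A Y') = 0"
      using A Y' gH_opI_anti[of X Y'] gH_opS_anti[of X Y'] gH_opT_anti[of X Y'] unfolding TT_def opT_def by auto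
    then show "gH Y (A Y') = 0" unfolding Y by (simp add: gH_scale_left)
  qed
  ultimately show "Y \<in> {Y \<in> TT X. \<forall>Y'\<in>TT X. gH Y (A Y') = 0}" by blast
next
  fix Y assume "Y \<in> {Y \<in> TT X. \<forall>Y'\<in>TT X. gH Y (A Y') = 0}"
  then have T: "Y \<in> TT X" and H: "\<forall>Y'\<in>TT X. gH Y (A Y') = 0" by auto
  let ?q = "gH X X"
  let ?c1 = "gH Y (A (opI X))" and ?c2 = "gH Y (A (opS X))" and ?c3 = "gH Y (A (opI (opS X)))"
  from A consider "A = opI" | "A = opS" | "A = opT" by blast
  then show "Y \<in> range (\<lambda>a. a *\<^sub>R X)"
  proof cases
    case 1
    have anti: "gH a (opI b) = - gH (opI a) b" for a b using gH_opI_anti[of a b] by simp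
    have AY: "opI Y = (- ?c1 / ?q) *\<^sub>R opI X + (?c2 / ?q) *\<^sub>R opS X + (?c3 / ?q) *\<^sub>R opI (opS X)"
      using AY_eq[OF q linear_opI anti] H unfolding 1 by simp
    have "Y = - opI (opI Y)" by (simp add: opI_opI)
    also have "\<dots> = (- ?c1 / ?q) *\<^sub>R X + 0 *\<^sub>R opI X + (?c3 / ?q) *\<^sub>R opS X + (- ?c2 / ?q) *\<^sub>R opI (opS X)"
      unfolding AY by (simp add: lin_simps opI_diff opS_diff)
    finally have "Y = (- ?c1 / ?q) *\<^sub>R X" by (rule four_form[OF q _ T])
    then show ?thesis by blast
  next
    case 2
    have anti: "gH a (opS b) = - gH (opS a) b" for a b using gH_opS_anti[of a b] by simp
    have AY: "opS Y = (- ?c1 / ?q) *\<^sub>R opI X + (?c2 / ?q) *\<^sub>R opS X + (?c3 / ?q) *\<^sub>R opI (opS X)"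
      using AY_eq[OF q linear_opS anti] H unfolding 2 by simp
    have "Y = opS (opS Y)" by (simp add: opS_opS)
    also have "\<dots> = (?c2 / ?q) *\<^sub>R X + (- ?c3 / ?q) *\<^sub>R opI X + 0 *\<^sub>R opS X + (?c1 / ?q) *\<^sub>R opI (opS X)"
      unfolding AY by (simp add: lin_simps opI_diff opS_diff)
    finally have "Y = (?c2 / ?q) *\<^sub>R X" by (rule four_form[OF q _ T])
    then show ?thesis by blast
  next
    case 3
    have anti: "gH a (opT b) = - gH (opT a) b" for a b using gH_opT_anti[of a b] by simp
    have AY: "opT Y = (- ?c1 / ?q) *\<^sub>R opI X + (?c2 / ?q) *\<^sub>R opS X + (?c3 / ?q) *\<^sub>R opI (opS X)"
      using AY_eq[OF q linear_opT anti] H unfolding 3 by simp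
    have "Y = opT (opT Y)" by (simp add: opT_def lin_simps)
    also have "\<dots> = (?c3 / ?q) *\<^sub>R X + (?c2 / ?q) *\<^sub>R opI X + (- ?c1 / ?q) *\<^sub>R opS X + 0 *\<^sub>R opI (opS X)"
      unfolding AY by (simp add: opT_def lin_simps opI_diff opS_diff)
    finally have "Y = (?c3 / ?q) *\<^sub>R X" by (rule four_form[OF q _ T])
    then show ?thesis by blast
  qed
qed

end

theorem mainTheorem19:
  fixes lam :: real
  assumes "lam > 0"
  defines "Z \<equiv> level_set (u_ex :: 'n::finite option \<Rightarrow> 'n \<Rightarrow> int) (l1_ex lam) (\<lambda>_. 0)"
      and "N \<equiv> kerN (u_ex :: 'n::finite option \<Rightarrow> 'n \<Rightarrow> int)"
  shows
    "(\<forall>p\<in>Z. \<forall>t\<in>N. torus_act t p = p \<longrightarrow> t = (\<lambda>_. 1))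
   \<and> embedded_submanifold (4 * CARD('n) + 1) Z
   \<and> (\<exists>(qb :: 'n option cpt \<Rightarrow> bool) (qx :: 'n option cpt \<Rightarrow> real^('n \<times> 4)).
        (\<forall>p\<in>Z. \<exists>U. open U \<and> p \<in> U \<and> (\<forall>x\<in>U \<inter> Z. qb x = qb p))
      \<and> smooth_on_set Z qx
      \<and> (\<forall>p\<in>Z. \<forall>U g. open U \<and> p \<in> U \<and> smooth_on U g \<and> (\<forall>x\<in>U \<inter> Z. g x = qx x)
              \<longrightarrow> frechet_derivative g (at p) ` tangent_space Z p = UNIV)
      \<and> (\<forall>p\<in>Z. \<forall>p'\<in>Z. (qb p' = qb p \<and> qx p' = qx p) \<longleftrightarrow> p' \<in> orbit N p)
      \<and> (\<forall>b x. \<exists>p\<in>Z. qb p = b \<and> qx p = x)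
      \<and> (\<forall>p\<in>Z. sigma p \<in> Z \<and> qb (sigma p) = (\<not> qb p)))
   \<and> (\<forall>p\<in>Z. \<forall>A\<in>{opI, opS, opT}.
        {Y\<in>tangent_space Z p. \<forall>Y'\<in>tangent_space Z p. omega A Y Y' = 0}
          = tangent_space (orbit N p) p)"
proof -
  have lam: "lam > 0" by (rule assms)
  have Zeq: "Z = Zs lam" unfolding Z_def by (rule level_eq)
  have P1: "\<forall>p\<in>Z. \<forall>t\<in>N. torus_act t p = p \<longrightarrow> t = (\<lambda>_. 1)"
    unfolding Zeq N_def using free_action[OF _ lam] by blast
  have P2: "embedded_submanifold (4 * CARD('n) + 1) Z"
    unfolding Zeq by (rule Zs_embedded[OF lam])
  have P3a: "\<forall>p\<in>Z. \<exists>U. open U \<and> p \<in> U \<and> (\<forall>x\<in>U \<inter> Z. qb x = qb p)"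
  proof
    fix p assume "p \<in> Z"
    then have "p \<in> Ub (qb p)" unfolding Zeq using Ub_mem[OF _ lam] by blast
    then show "\<exists>U. open U \<and> p \<in> U \<and> (\<forall>x\<in>U \<inter> Z. qb x = qb p)"
      using open_Ub qb_Ub by blast
  qed
  have P3b: "smooth_on_set Z qx"
    unfolding smooth_on_set_def
  proof
    fix p assume "p \<in> Z"
    then have "p \<in> Ub (qb p)" unfolding Zeq using Ub_mem[OF _ lam] by blast
    then show "\<exists>U g. open U \<and> p \<in> U \<and> smooth_on U g \<and> (\<forall>x\<in>U \<inter> Z. g x = qx x)"
      using open_Ub qx_smooth by blast
  qed
  have P3c: "\<forall>p\<in>Z. \<forall>U g. open U \<and> p \<in> U \<and> smooth_on U g \<and> (\<forall>x\<in>U \<inter> Z. g x = qx x)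
              \<longrightarrow> frechet_derivative g (at p) ` tangent_space Z p = UNIV"
    unfolding Zeq using deriv_surj[OF _ lam] by blast
  have P3d: "\<forall>p\<in>Z. \<forall>p'\<in>Z. (qb p' = qb p \<and> qx p' = qx p) \<longleftrightarrow> p' \<in> orbit N p"
    unfolding Zeq N_def using fiber[OF _ _ lam] by blast
  have P3e: "\<forall>b x. \<exists>p\<in>Z. qb p = b \<and> qx p = x"
    unfolding Zeq using sec_Zs[OF lam] qb_sec[OF lam] qx_sec[OF lam] by blast
  have P3f: "\<forall>p\<in>Z. sigma p \<in> Z \<and> qb (sigma p) = (\<not> qb p)"
    unfolding Zeq using sigma_Zs qb_sigma[OF _ lam] by blast
  have P4: "\<forall>p\<in>Z. \<forall>A\<in>{opI, opS, opT}.
        {Y\<in>tangent_space Z p. \<forall>Y'\<in>tangent_space Z p. omega A Y Y' = 0}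
          = tangent_space (orbit N p) p"
  proof (intro ballI)
    fix p and A :: "'n option cpt \<Rightarrow> 'n option cpt" assume p: "p \<in> Z" and A: "A \<in> {opI, opS, opT}"
    have pZ: "p \<in> Zs lam" using p Zeq by simp
    have TS: "tangent_space Z p = TT (Jg p)"
      unfolding Zeq tangent_eq[OF pZ lam] Tp_def TT_def opT_def ..
    have q: "gH (Jg p) (Jg p) \<noteq> 0" by (rule Zs_q[OF pZ lam])
    have p0: "p \<noteq> 0" using Zs_neq[OF pZ lam] by auto
    show "{Y\<in>tangent_space Z p. \<forall>Y'\<in>tangent_space Z p. omega A Y Y' = 0} = tangent_space (orbit N p) p"
      unfolding TS omega_def N_def orbit_tangent[OF p0] using nondeg_core[OF q A] by simp
  qed
  show ?thesis
    using P1 P2 P3a P3b P3c P3d P3e P3f P4 by blast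
qed

end
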